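(* There exists a unique pointwise minimal pair of maps $t\mapsto\sigma_P(t)$, $P\in\{1,2\}$, assigning to every well-formed tree $t$ over $\tilde A_{i,k}$ a $P$-signature $\sigma_P(t)$, such that for every player $P$, all well-formed trees $t,t_L,t_R$ and all $j\in\{i,\ldots,k\}$: (1) $\sigma_P(t)=\infty$ iff $P$ does not win $\mathcal G(t)$; (2) $\sigma_P(\sim(t))=(0,\ldots,0)$ if $P$ wins $\mathcal G(\sim(t))$; (3) if $\sigma_P(t)=(\theta_{i'},\ldots,\theta_{k'})$ and $j$ is $P$-winning, then $\sigma_P(p_j(t))=(\theta_{i'},\ldots,\theta_{j-1},0,\ldots,0)$ (coordinates with index $<j$ kept, the others $0$); (4) if $\sigma_P(t)=(\theta_{i'},\ldots,\theta_{k'})$ and $j$ is $P$-losing, then $\sigma_P(p_j(t))=(\theta_{i'},\ldots,\theta_{j-2},\theta_j+1,0,\ldots,0)$; (5) $\sigma_P(c_P(t_L,t_R))=\min\{\sigma_P(t_L),\sigma_P(t_R)\}$; (6) $\sigma_P(c_{\bar P}(t_L,t_R))=\max\{\sigma_P(t_L),\sigma_P(t_R)\}$. Pointwise minimal means: for every pair $(\sigma'_1,\sigma'_2)$ satisfying (1)–(6), every $P$ and every well-formed $t$, $\sigma_P(t)\le_{lex}\sigma'_P(t)$.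
   Context: Fix natural numbers $i<k$. Trees over a ranked alphabet are partial maps $t:\omega^*\to A$ with non-empty prefix-closed domain where a node with an $m$-ary label has exactly the children $u0,\ldots,u(m-1)$; $a(t_0,\ldots,t_{m-1})$ is the tree with root label $a$ and children subtrees $t_0,\ldots$. The alphabet $\tilde A_{i,k}$ has unary letters $p_i,\ldots,p_k$, a unary letter $\sim$, and binary letters $c_1,c_2$. Players are $1,2$; $\bar P$ is the opponent of $P$. A tree $t$ is well-formed if no branch has infinitely many $\sim$. A node $u$ is switched if an odd number of strict prefixes $w\prec u$ have $t(w)=\sim$, kept otherwise. The game $\mathcal G(t)$: positions are nodes, moves to children, start at the root; $u$ is controlled by $P$ iff ($u$ kept and $t(u)=c_P$) or ($u$ switched and $t(u)=c_{\bar P}$). An infinite play (branch), which is eventually kept or eventually switched, is won by player 1 iff it is kept and the least $j$ with infinitely many nodes labelled $p_j$ is even, or it is switched and this $j$ is odd (if no priority letter occurs infinitely often take $j=k$). $P$ wins $\mathcal G(t)$ if $P$ has a winning strategy. A number $j\in\{i,\ldots,k\}$ is $P$-losing if it is odd (for $P=1$) resp. even (for $P=2$), and $P$-winning otherwise; $i',k'$ denote the least and largest $P$-losing numbers. A $P$-signature is either $\infty$ or a tuple $(\theta_{i'},\theta_{i'+2},\ldots,\theta_{k'})$ of countable ordinals indexed by the $P$-losing numbers; tuples are ordered lexicographically ($\le_{lex}$) with smaller indices more significant, and $\infty$ is the largest element. *)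

theory Defs
  imports Main
begin

text \<open>Countable ordinals are represented as isomorphism classes of well-orders
whose field is a subset of the natural numbers.\<close>

definition ord_iso_nat :: "nat rel \<Rightarrow> nat rel \<Rightarrow> bool" where
  "ord_iso_nat r s \<longleftrightarrow> (r, s) \<in> ordIso"

lemma part_equivp_ord_iso_nat: "part_equivp ord_iso_nat"
proof (rule part_equivpI)
  show "\<exists>x. ord_iso_nat x x"
    using ordIso_reflexive[OF natLeq_Well_order] unfolding ord_iso_nat_def by blast
  show "symp ord_iso_nat"
    unfolding symp_def ord_iso_nat_def using ordIso_symmetric by blast
  show "transp ord_iso_nat"
    unfolding transp_def ord_iso_nat_def using ordIso_transitive by blast
qed

quotient_type cord = "nat rel" / partial: ord_iso_nat
  by (rule part_equivp_ord_iso_nat)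

lift_definition cord_le :: "cord \<Rightarrow> cord \<Rightarrow> bool" is "\<lambda>r s. (r, s) \<in> ordLeq"
  unfolding ord_iso_nat_def
  by (meson ordIso_ordLeq_trans ordLeq_ordIso_trans ordIso_symmetric)

definition cord_less :: "cord \<Rightarrow> cord \<Rightarrow> bool" where
  "cord_less a b \<longleftrightarrow> cord_le a b \<and> \<not> cord_le b a"

definition cord_zero :: cord where
  "cord_zero = (THE z. \<forall>x. cord_le z x)"

definition cord_succ :: "cord \<Rightarrow> cord" where
  "cord_succ a = (THE s. cord_less a s \<and> (\<forall>x. cord_less a x \<longrightarrow> cord_le s x))"

datatype player = P1 | P2

fun opp :: "player \<Rightarrow> player" where
  "opp P1 = P2" | "opp P2 = P1"

text \<open>Letters: \<open>Pr j\<close> is the priority letter p_j, \<open>Sim\<close> is \<open>\<sim>\<close>, \<open>C1\<close>, \<open>C2\<close> are c_1, c_2.\<close>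
datatype lab = Pr nat | Sim | C1 | C2

fun cP :: "player \<Rightarrow> lab" where
  "cP P1 = C1" | "cP P2 = C2"

fun arity :: "lab \<Rightarrow> nat" where
  "arity (Pr _) = 1" | "arity Sim = 1" | "arity C1 = 2" | "arity C2 = 2"

definition in_alph :: "nat \<Rightarrow> nat \<Rightarrow> lab \<Rightarrow> bool" where
  "in_alph i k a \<longleftrightarrow> (\<forall>j. a = Pr j \<longrightarrow> i \<le> j \<and> j \<le> k)"

type_synonym tree = "nat list \<Rightarrow> lab option"

definition is_tree :: "nat \<Rightarrow> nat \<Rightarrow> tree \<Rightarrow> bool" where
  "is_tree i k t \<longleftrightarrow>
     t [] \<noteq> None \<and>
     (\<forall>u n. t (u @ [n]) \<noteq> None \<longrightarrow> t u \<noteq> None) \<and>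
     (\<forall>u a. t u = Some a \<longrightarrow> in_alph i k a \<and> (\<forall>n. t (u @ [n]) \<noteq> None \<longleftrightarrow> n < arity a))"

definition unary :: "lab \<Rightarrow> tree \<Rightarrow> tree" where
  "unary a t = (\<lambda>u. case u of [] \<Rightarrow> Some a | n # v \<Rightarrow> (if n = 0 then t v else None))"

definition binary :: "lab \<Rightarrow> tree \<Rightarrow> tree \<Rightarrow> tree" where
  "binary a tL tR = (\<lambda>u. case u of [] \<Rightarrow> Some a
       | n # v \<Rightarrow> (if n = 0 then tL v else if n = 1 then tR v else None))"

text \<open>Branches are given by direction sequences; \<open>pref b m\<close> is the node at depth m.\<close>
definition pref :: "(nat \<Rightarrow> nat) \<Rightarrow> nat \<Rightarrow> nat list" where
  "pref b m = map b [0..<m]"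

definition is_branch :: "tree \<Rightarrow> (nat \<Rightarrow> nat) \<Rightarrow> bool" where
  "is_branch t b \<longleftrightarrow> (\<forall>m. t (pref b m) \<noteq> None)"

definition well_formed :: "nat \<Rightarrow> nat \<Rightarrow> tree \<Rightarrow> bool" where
  "well_formed i k t \<longleftrightarrow> is_tree i k t \<and>
     (\<forall>b. is_branch t b \<longrightarrow> finite {m. t (pref b m) = Some Sim})"

definition switched :: "tree \<Rightarrow> nat list \<Rightarrow> bool" where
  "switched t u \<longleftrightarrow> odd (card {m. m < length u \<and> t (take m u) = Some Sim})"

definition controls :: "tree \<Rightarrow> player \<Rightarrow> nat list \<Rightarrow> bool" where
  "controls t P u \<longleftrightarrow> (\<not> switched t u \<and> t u = Some (cP P)) \<or> (switched t u \<and> t u = Some (cP (opp P)))"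

definition min_inf_prio :: "nat \<Rightarrow> tree \<Rightarrow> (nat \<Rightarrow> nat) \<Rightarrow> nat" where
  "min_inf_prio k t b =
     (if \<exists>j. infinite {m. t (pref b m) = Some (Pr j)}
      then (LEAST j. infinite {m. t (pref b m) = Some (Pr j)}) else k)"

definition eventually_switched :: "tree \<Rightarrow> (nat \<Rightarrow> nat) \<Rightarrow> bool" where
  "eventually_switched t b \<longleftrightarrow> (\<exists>N. \<forall>m\<ge>N. switched t (pref b m))"

definition wins_play :: "nat \<Rightarrow> tree \<Rightarrow> player \<Rightarrow> (nat \<Rightarrow> nat) \<Rightarrow> bool" where
  "wins_play k t P b \<longleftrightarrow>
     ((if eventually_switched t b then odd (min_inf_prio k t b) else even (min_inf_prio k t b))
      \<longleftrightarrow> P = P1)"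

definition strategy :: "tree \<Rightarrow> player \<Rightarrow> (nat list \<Rightarrow> nat) \<Rightarrow> bool" where
  "strategy t P s \<longleftrightarrow> (\<forall>u. t u \<noteq> None \<and> controls t P u \<longrightarrow> t (u @ [s u]) \<noteq> None)"

definition consistent :: "tree \<Rightarrow> player \<Rightarrow> (nat list \<Rightarrow> nat) \<Rightarrow> (nat \<Rightarrow> nat) \<Rightarrow> bool" where
  "consistent t P s b \<longleftrightarrow> (\<forall>m. controls t P (pref b m) \<longrightarrow> b m = s (pref b m))"

definition wins :: "nat \<Rightarrow> tree \<Rightarrow> player \<Rightarrow> bool" where
  "wins k t P \<longleftrightarrow> (\<exists>s. strategy t P s \<and>
      (\<forall>b. is_branch t b \<and> consistent t P s b \<longrightarrow> wins_play k t P b))"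

definition losing :: "player \<Rightarrow> nat \<Rightarrow> bool" where
  "losing P j \<longleftrightarrow> (if P = P1 then odd j else even j)"

text \<open>A P-signature: \<open>None\<close> is \<open>\<infinity>\<close>; \<open>Some \<theta>\<close> is the tuple \<open>(\<theta>_j)\<close> indexed by the
P-losing \<open>j \<in> {i..k}\<close>, with all other entries fixed to 0 (so the representation is unique).\<close>
type_synonym sig = "(nat \<Rightarrow> cord) option"

definition valid_sig :: "nat \<Rightarrow> nat \<Rightarrow> player \<Rightarrow> sig \<Rightarrow> bool" where
  "valid_sig i k P s \<longleftrightarrow> (\<forall>\<theta>. s = Some \<theta> \<longrightarrow>
      (\<forall>j. \<not> (i \<le> j \<and> j \<le> k \<and> losing P j) \<longrightarrow> \<theta> j = cord_zero))"

definition zero_sig :: "nat \<Rightarrow> cord" where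
  "zero_sig = (\<lambda>_. cord_zero)"

definition lex_less :: "(nat \<Rightarrow> cord) \<Rightarrow> (nat \<Rightarrow> cord) \<Rightarrow> bool" where
  "lex_less f g \<longleftrightarrow> (\<exists>l. cord_less (f l) (g l) \<and> (\<forall>l'<l. f l' = g l'))"

fun sig_le :: "sig \<Rightarrow> sig \<Rightarrow> bool" where
  "sig_le _ None = True"
| "sig_le None (Some _) = False"
| "sig_le (Some f) (Some g) = (f = g \<or> lex_less f g)"

definition sig_min :: "sig \<Rightarrow> sig \<Rightarrow> sig" where
  "sig_min a b = (if sig_le a b then a else b)"

definition sig_max :: "sig \<Rightarrow> sig \<Rightarrow> sig" where
  "sig_max a b = (if sig_le a b then b else a)"

definition reset_from :: "nat \<Rightarrow> (nat \<Rightarrow> cord) \<Rightarrow> (nat \<Rightarrow> cord)" where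
  "reset_from j \<theta> = (\<lambda>l. if l < j then \<theta> l else cord_zero)"

definition incr_at :: "nat \<Rightarrow> (nat \<Rightarrow> cord) \<Rightarrow> (nat \<Rightarrow> cord)" where
  "incr_at j \<theta> = (\<lambda>l. if l < j then \<theta> l else if l = j then cord_succ (\<theta> j) else cord_zero)"

definition sig_conditions :: "nat \<Rightarrow> nat \<Rightarrow> (player \<Rightarrow> tree \<Rightarrow> sig) \<Rightarrow> bool" where
  "sig_conditions i k \<sigma> \<longleftrightarrow>
    (\<forall>P t. well_formed i k t \<longrightarrow> valid_sig i k P (\<sigma> P t)) \<and>
    (\<forall>P t. well_formed i k t \<longrightarrow> (\<sigma> P t = None \<longleftrightarrow> \<not> wins k t P)) \<and>
    (\<forall>P t. well_formed i k t \<longrightarrow> wins k (unary Sim t) P \<longrightarrow> \<sigma> P (unary Sim t) = Some zero_sig) \<and>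
    (\<forall>P t j \<theta>. well_formed i k t \<longrightarrow> i \<le> j \<longrightarrow> j \<le> k \<longrightarrow> \<not> losing P j \<longrightarrow>
        \<sigma> P t = Some \<theta> \<longrightarrow> \<sigma> P (unary (Pr j) t) = Some (reset_from j \<theta>)) \<and>
    (\<forall>P t j \<theta>. well_formed i k t \<longrightarrow> i \<le> j \<longrightarrow> j \<le> k \<longrightarrow> losing P j \<longrightarrow>
        \<sigma> P t = Some \<theta> \<longrightarrow> \<sigma> P (unary (Pr j) t) = Some (incr_at j \<theta>)) \<and>
    (\<forall>P tL tR. well_formed i k tL \<longrightarrow> well_formed i k tR \<longrightarrow>
        \<sigma> P (binary (cP P) tL tR) = sig_min (\<sigma> P tL) (\<sigma> P tR)) \<and>
    (\<forall>P tL tR. well_formed i k tL \<longrightarrow> well_formed i k tR \<longrightarrow>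
        \<sigma> P (binary (cP (opp P)) tL tR) = sig_max (\<sigma> P tL) (\<sigma> P tR))"

definition pointwise_minimal :: "nat \<Rightarrow> nat \<Rightarrow> (player \<Rightarrow> tree \<Rightarrow> sig) \<Rightarrow> bool" where
  "pointwise_minimal i k \<sigma> \<longleftrightarrow> sig_conditions i k \<sigma> \<and>
     (\<forall>\<sigma>'. sig_conditions i k \<sigma>' \<longrightarrow>
        (\<forall>P t. well_formed i k t \<longrightarrow> sig_le (\<sigma> P t) (\<sigma>' P t)))"

end

theory Submission
  imports Defs "HOL-Library.Nat_Bijection" "HOL-Library.Countable" "HOL-Library.Infinite_Set"
begin


lemma cord_WO: "Well_order (rep_cord a)"
  using Quotient3_rep_reflp[OF Quotient3_cord, of a] unfolding ord_iso_nat_def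
  using ordIso_iff_ordLeq ordLeq_Well_order_simp by blast

lemma cord_eq_iff: "a = b \<longleftrightarrow> (rep_cord a, rep_cord b) \<in> ordIso"
  using Quotient3_rel_rep[OF Quotient3_cord, of a b] unfolding ord_iso_nat_def by simp

lemma cord_le_rep: "cord_le a b \<longleftrightarrow> (rep_cord a, rep_cord b) \<in> ordLeq"
  by (simp add: cord_le.rep_eq)

lemma cord_le_refl[simp]: "cord_le a a"
  using cord_WO cord_le_rep ordLeq_reflexive by blast

lemma cord_le_trans: "cord_le a b \<Longrightarrow> cord_le b c \<Longrightarrow> cord_le a c"
  using cord_le_rep ordLeq_transitive by blast

lemma cord_le_total: "cord_le a b \<or> cord_le b a"
  using cord_le_rep ordLeq_total cord_WO by blast

lemma cord_le_antisym: "cord_le a b \<Longrightarrow> cord_le b a \<Longrightarrow> a = b"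
  using cord_le_rep cord_eq_iff ordIso_iff_ordLeq by blast

lemma cord_less_rep: "cord_less a b \<longleftrightarrow> (rep_cord a, rep_cord b) \<in> ordLess"
  unfolding cord_less_def cord_le_rep
  using not_ordLeq_iff_ordLess[OF cord_WO cord_WO] ordLess_imp_ordLeq by blast

lemma cord_less_le_trans: "cord_less a b \<Longrightarrow> cord_le b c \<Longrightarrow> cord_less a c"
  unfolding cord_less_def using cord_le_trans by blast

lemma cord_le_less_trans: "cord_le a b \<Longrightarrow> cord_less b c \<Longrightarrow> cord_less a c"
  unfolding cord_less_def using cord_le_trans by blast

lemma cord_not_le: "\<not> cord_le a b \<longleftrightarrow> cord_less b a"
  unfolding cord_less_def using cord_le_total by blast

lemma cord_less_irrefl[simp]: "\<not> cord_less a a"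
  unfolding cord_less_def by simp

lemma wf_cord_less: "wf {(a, b). cord_less a b}"
proof -
  have "{(a, b). cord_less a b} \<subseteq> inv_image ordLess rep_cord"
    using cord_less_rep by auto
  thus ?thesis using wf_ordLess wf_inv_image wf_subset by blast
qed

lemma cord_min_ex:
  assumes "x \<in> Q" shows "\<exists>z\<in>Q. \<forall>y\<in>Q. cord_le z y"
proof -
  obtain z where "z \<in> Q" "\<forall>y. (y, z) \<in> {(a, b). cord_less a b} \<longrightarrow> y \<notin> Q"
    using wfE_min[OF wf_cord_less assms] by blast
  thus ?thesis using cord_not_le by blast
qed

lemma cord_zero_le[simp]: "cord_le cord_zero x"
proof -
  obtain z where z: "\<forall>y. cord_le z y" using cord_min_ex[of undefined UNIV] by blast
  have "(THE z. \<forall>x. cord_le z x) = z"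
    by (rule the_equality) (use z cord_le_antisym in blast)+
  thus ?thesis unfolding cord_zero_def using z by simp
qed



lemma compat_ordLeq:
  assumes W: "Well_order r" and W': "Well_order r'"
    and inj: "inj_on f (Field r)" and im: "f ` Field r \<subseteq> Field r'"
    and cmp: "\<And>a b. (a, b) \<in> r \<Longrightarrow> (f a, f b) \<in> r'"
  shows "(r, r') \<in> ordLeq"
proof (rule ccontr)
  assume "(r, r') \<notin> ordLeq"
  hence "(r', r) \<in> ordLess" using not_ordLeq_iff_ordLess[OF W' W] by blast
  then obtain g where eS: "embedS r' r g" unfolding ordLess_def by blast
  hence e: "embed r' r g" and nb: "\<not> bij_betw g (Field r') (Field r)" unfolding embedS_def by auto
  have cg: "compat r' r g" and ig: "inj_on g (Field r')" and of: "wo_rel.ofilter r (g ` Field r')"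
    using e embed_iff_compat_inj_on_ofilter[OF W' W] by auto
  have sub: "g ` Field r' \<subseteq> Field r" and und: "\<And>a. a \<in> g ` Field r' \<Longrightarrow> under r a \<subseteq> g ` Field r'"
    using of unfolding wo_rel.ofilter_def[OF wo_rel.intro[OF W]] by auto
  have "g ` Field r' \<noteq> Field r" using nb ig unfolding bij_betw_def by auto
  then obtain a where a: "a \<in> Field r" "a \<notin> g ` Field r'" using sub by blast
  define h where "h = g \<circ> f"
  have hF: "\<And>x. x \<in> Field r \<Longrightarrow> h x \<in> g ` Field r'" using im unfolding h_def by auto
  have tot: "\<And>x y. x \<in> Field r \<Longrightarrow> y \<in> Field r \<Longrightarrow> (x, y) \<in> r \<or> (y, x) \<in> r"
    using W unfolding order_on_defs total_on_def refl_on_def by metis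
  have ha: "(h a, a) \<in> r \<and> h a \<noteq> a"
  proof -
    have "h a \<in> Field r" using hF a sub by blast
    moreover have "(a, h a) \<notin> r" using und[OF hF[OF a(1)]] a(2) unfolding under_def by blast
    ultimately show ?thesis using tot a(1) a(2) hF[OF a(1)] by metis
  qed
  have hmono: "\<And>x y. (x, y) \<in> r \<Longrightarrow> x \<noteq> y \<Longrightarrow> (h x, h y) \<in> r \<and> h x \<noteq> h y"
  proof -
    fix x y assume xy: "(x, y) \<in> r" "x \<noteq> y"
    have "x \<in> Field r" "y \<in> Field r" using xy unfolding Field_def by auto
    hence "f x \<noteq> f y" using inj xy(2) unfolding inj_on_def by blast
    moreover have "f x \<in> Field r'" "f y \<in> Field r'" using im \<open>x \<in> Field r\<close> \<open>y \<in> Field r\<close> by auto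
    ultimately have "g (f x) \<noteq> g (f y)" using ig unfolding inj_on_def by blast
    thus "(h x, h y) \<in> r \<and> h x \<noteq> h y" using cmp[OF xy(1)] cg unfolding compat_def h_def by auto
  qed
  let ?Q = "{x. (h x, x) \<in> r \<and> h x \<noteq> x}"
  have wfr: "wf (r - Id)" using W unfolding well_order_on_def by blast
  obtain x0 where x0: "x0 \<in> ?Q" and mn: "\<And>y. (y, x0) \<in> r - Id \<Longrightarrow> y \<notin> ?Q"
    using wfE_min[OF wfr, of a ?Q] ha by blast
  let ?y = "h x0"
  have "(h ?y, h x0) \<in> r \<and> h ?y \<noteq> h x0" using hmono x0 by blast
  hence "?y \<in> ?Q" by simp
  moreover have "(?y, x0) \<in> r - Id" using x0 by simp
  ultimately show False using mn by blast
qed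



definition osum :: "(nat \<Rightarrow> nat rel) \<Rightarrow> ((nat \<times> nat) \<times> (nat \<times> nat)) set" where
  "osum r = {((n, x), (m, y)). (n < m \<and> x \<in> Field (r n) \<and> y \<in> Field (r m)) \<or> (n = m \<and> (x, y) \<in> r n)}"

lemma osum_Field: "Field (osum r) \<subseteq> {(n, x). x \<in> Field (r n)}"
  unfolding osum_def Field_def by auto

lemma osum_Well_order:
  assumes W: "\<And>n. Well_order (r n)"
  shows "Well_order (osum r)"
proof -
  have rf: "\<And>n x. x \<in> Field (r n) \<Longrightarrow> (x, x) \<in> r n"
    using W unfolding order_on_defs refl_on_def by blast
  have tr: "\<And>n. trans (r n)" using W unfolding order_on_defs by blast
  have an: "\<And>n. antisym (r n)" using W unfolding order_on_defs by blast
  have to: "\<And>n. total_on (Field (r n)) (r n)" using W unfolding order_on_defs by blast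
  have wfn: "\<And>n. wf (r n - Id)" using W unfolding order_on_defs by blast
  have FS: "Field (osum r) = {(n, x). x \<in> Field (r n)}"
  proof
    show "Field (osum r) \<subseteq> {(n, x). x \<in> Field (r n)}" by (rule osum_Field)
    show "{(n, x). x \<in> Field (r n)} \<subseteq> Field (osum r)"
      using rf unfolding osum_def Field_def by fastforce
  qed
  have "refl_on (Field (osum r)) (osum r)"
    unfolding refl_on_def FS by (auto simp: osum_def rf)
  moreover have "trans (osum r)"
    unfolding trans_def osum_def
    using tr unfolding trans_def Field_def by auto
  moreover have "antisym (osum r)"
    unfolding antisym_def osum_def using an unfolding antisym_def by auto
  moreover have "total_on (Field (osum r)) (osum r)"
    unfolding total_on_def FS using to unfolding total_on_def
    by (auto simp: osum_def, metis nat_neq_iff)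
  moreover have "wf (osum r - Id)"
  proof -
    have "osum r - Id \<subseteq> fst <*mlex*> same_fst (\<lambda>_. True) (\<lambda>n. r n - Id)"
      unfolding osum_def by (auto simp: mlex_iff same_fst_def)
    thus ?thesis using wf_subset wf_mlex wf_same_fst wfn by metis
  qed
  moreover have "osum r \<subseteq> Field (osum r) \<times> Field (osum r)" by (auto intro: FieldI1 FieldI2)
  ultimately show ?thesis unfolding order_on_defs by blast
qed



lemma osum_Field_eq:
  assumes W: "\<And>n. Well_order (r n)"
  shows "Field (osum r) = {(n, x). x \<in> Field (r n)}"
proof
  show "Field (osum r) \<subseteq> {(n, x). x \<in> Field (r n)}" by (rule osum_Field)
  have rf: "\<And>n x. x \<in> Field (r n) \<Longrightarrow> (x, x) \<in> r n"
    using W unfolding order_on_defs refl_on_def by blast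
  show "{(n, x). x \<in> Field (r n)} \<subseteq> Field (osum r)"
    using rf unfolding osum_def Field_def by fastforce
qed

lemma transport_cord:
  fixes S :: "((nat \<times> nat) \<times> (nat \<times> nat)) set"
  assumes W: "Well_order S"
  shows "\<exists>b. (S, rep_cord b) \<in> ordIso"
proof -
  let ?T = "dir_image S prod_encode"
  have inj: "inj_on prod_encode (Field S)" using inj_prod_encode inj_on_subset by blast
  have WT: "Well_order ?T" using Well_order_dir_image[OF W inj] .
  have ST: "(S, ?T) \<in> ordIso" using dir_image_ordIso[OF W inj] .
  have "ord_iso_nat ?T ?T" unfolding ord_iso_nat_def using ordIso_reflexive[OF WT] .
  hence "ord_iso_nat (rep_cord (abs_cord ?T)) ?T" using Quotient3_rep_abs[OF Quotient3_cord] by blast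
  hence "(?T, rep_cord (abs_cord ?T)) \<in> ordIso" unfolding ord_iso_nat_def using ordIso_symmetric by blast
  thus ?thesis using ST ordIso_transitive by blast
qed

lemma osum_le:
  assumes W: "\<And>n. Well_order (r n)"
  shows "(r n, osum r) \<in> ordLeq"
proof (rule compat_ordLeq[where f = "Pair n"])
  show "Well_order (r n)" using W .
  show "Well_order (osum r)" using osum_Well_order[OF W] .
  show "inj_on (Pair n) (Field (r n))" by (auto simp: inj_on_def)
  show "Pair n ` Field (r n) \<subseteq> Field (osum r)" using osum_Field_eq[OF W] by auto
  show "\<And>a b. (a, b) \<in> r n \<Longrightarrow> ((n, a), (n, b)) \<in> osum r" unfolding osum_def by auto
qed

lemma cord_ub: fixes g :: "nat \<Rightarrow> cord" shows "\<exists>b. \<forall>n. cord_le (g n) b"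
proof -
  let ?r = "\<lambda>n. rep_cord (g n)"
  have W: "\<And>n. Well_order (?r n)" using cord_WO by blast
  obtain b where b: "(osum ?r, rep_cord b) \<in> ordIso"
    using transport_cord[OF osum_Well_order[of ?r, OF W]] by blast
  have "\<forall>n. cord_le (g n) b"
    unfolding cord_le_rep using osum_le[of ?r, OF W] b ordLeq_ordIso_trans by blast
  thus ?thesis by blast
qed

lemma cord_gt: "\<exists>b. cord_less a b"
proof -
  define r where "r = (\<lambda>n::nat. if n = 0 then rep_cord a else {(0::nat, 0::nat)})"
  have W1: "Well_order {(0::nat, 0::nat)}"
    unfolding order_on_defs Field_def refl_on_def trans_def antisym_def total_on_def by auto
  have W: "\<And>n. Well_order (r n)" unfolding r_def using cord_WO W1 by auto
  let ?S = "osum r"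
  have WS: "Well_order ?S" using osum_Well_order[OF W] .
  let ?A = "{(n, x). n = 0 \<and> x \<in> Field (r 0)}"
  have FS: "Field ?S = {(n, x). x \<in> Field (r n)}" using osum_Field_eq[OF W] .
  have of: "wo_rel.ofilter ?S ?A"
    unfolding wo_rel.ofilter_def[OF wo_rel.intro[OF WS]] FS under_def
    by (auto simp: osum_def intro: FieldI1)
  have "(1, 0) \<in> Field ?S" using FS unfolding r_def Field_def by auto
  hence "?A \<subset> Field ?S" using FS by auto
  hence lt: "(Restr ?S ?A, ?S) \<in> ordLess" using ofilter_ordLess[OF WS of] by blast
  have le: "(r 0, Restr ?S ?A) \<in> ordLeq"
  proof (rule compat_ordLeq[where f = "Pair 0"])
    show "Well_order (r 0)" using W .
    show "Well_order (Restr ?S ?A)" using Well_order_Restr[OF WS] .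
    show "inj_on (Pair 0) (Field (r 0))" by (auto simp: inj_on_def)
    have rf: "\<And>x. x \<in> Field (r 0) \<Longrightarrow> (x, x) \<in> r 0"
      using W[of 0] unfolding order_on_defs refl_on_def by blast
    show "Pair 0 ` Field (r 0) \<subseteq> Field (Restr ?S ?A)"
    proof
      fix p :: "nat \<times> nat" assume "p \<in> Pair 0 ` Field (r 0)"
      then obtain x where "p = (0, x)" "x \<in> Field (r 0)" by blast
      hence "(p, p) \<in> Restr ?S ?A" using rf unfolding osum_def by auto
      thus "p \<in> Field (Restr ?S ?A)" by (rule FieldI1)
    qed
    show "\<And>x y. (x, y) \<in> r 0 \<Longrightarrow> ((0, x), (0, y)) \<in> Restr ?S ?A"
      unfolding osum_def by (auto intro: FieldI1 FieldI2)
  qed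
  obtain b where b: "(?S, rep_cord b) \<in> ordIso" using transport_cord[OF WS] by blast
  have "(rep_cord a, rep_cord b) \<in> ordLess"
    using le lt b ordLeq_ordLess_trans ordLess_ordIso_trans unfolding r_def by fastforce
  thus ?thesis using cord_less_rep by blast
qed



lemma cord_succ_ex: "\<exists>s. cord_less a s \<and> (\<forall>x. cord_less a x \<longrightarrow> cord_le s x)"
proof -
  obtain b where "cord_less a b" using cord_gt by blast
  then obtain z where "z \<in> {s. cord_less a s}" "\<forall>y\<in>{s. cord_less a s}. cord_le z y"
    using cord_min_ex[of b "{s. cord_less a s}"] by blast
  thus ?thesis by blast
qed

lemma cord_succ_prop: "cord_less a (cord_succ a) \<and> (\<forall>x. cord_less a x \<longrightarrow> cord_le (cord_succ a) x)"
proof -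
  obtain s where s: "cord_less a s \<and> (\<forall>x. cord_less a x \<longrightarrow> cord_le s x)" using cord_succ_ex by blast
  have "cord_succ a = s" unfolding cord_succ_def
    by (rule the_equality) (use s cord_le_antisym in blast)+
  thus ?thesis using s by simp
qed

lemma cord_less_succ: "cord_less a (cord_succ a)" using cord_succ_prop by blast
lemma cord_succ_le: "cord_less a x \<Longrightarrow> cord_le (cord_succ a) x" using cord_succ_prop by blast

lemma cord_succ_mono: "cord_le a b \<Longrightarrow> cord_le (cord_succ a) (cord_succ b)"
  using cord_succ_le cord_le_less_trans cord_less_succ by blast

lemma cord_succ_strict: "cord_less a b \<Longrightarrow> cord_less (cord_succ a) (cord_succ b)"
  using cord_succ_le cord_le_less_trans cord_less_succ by blast

lemma cord_ub_countable: fixes h :: "'a::countable \<Rightarrow> cord" shows "\<exists>b. \<forall>x. cord_le (h x) b"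
proof -
  obtain b where "\<forall>n. cord_le (h (from_nat n)) b" using cord_ub[of "\<lambda>n. h (from_nat n)"] by blast
  hence "\<forall>x. cord_le (h x) b" by (metis from_nat_to_nat)
  thus ?thesis by blast
qed

definition cord_lub :: "cord set \<Rightarrow> cord" where
  "cord_lub A = (SOME z. (\<forall>a\<in>A. cord_le a z) \<and> (\<forall>y. (\<forall>a\<in>A. cord_le a y) \<longrightarrow> cord_le z y))"

lemma cord_lub:
  assumes "\<forall>a\<in>A. cord_le a b"
  shows "(\<forall>a\<in>A. cord_le a (cord_lub A)) \<and> (\<forall>y. (\<forall>a\<in>A. cord_le a y) \<longrightarrow> cord_le (cord_lub A) y)"
proof -
  obtain z where "z \<in> {y. \<forall>a\<in>A. cord_le a y}" "\<forall>y\<in>{y. \<forall>a\<in>A. cord_le a y}. cord_le z y"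
    using cord_min_ex[of b "{y. \<forall>a\<in>A. cord_le a y}"] assms by blast
  hence "\<exists>z. (\<forall>a\<in>A. cord_le a z) \<and> (\<forall>y. (\<forall>a\<in>A. cord_le a y) \<longrightarrow> cord_le z y)" by blast
  thus ?thesis unfolding cord_lub_def by (rule someI_ex)
qed

lemma cord_lub_countable:
  fixes h :: "'a::countable \<Rightarrow> cord"
  shows "(\<forall>x\<in>X. cord_le (h x) (cord_lub (h ` X))) \<and>
         (\<forall>y. (\<forall>x\<in>X. cord_le (h x) y) \<longrightarrow> cord_le (cord_lub (h ` X)) y)"
proof -
  obtain b where "\<forall>x. cord_le (h x) b" using cord_ub_countable by blast
  thus ?thesis using cord_lub[of "h ` X" b] by blast
qed



lemma lex_less_irrefl[simp]: "\<not> lex_less f f"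
  unfolding lex_less_def by auto

lemma lex_less_trans: "lex_less f g \<Longrightarrow> lex_less g h \<Longrightarrow> lex_less f h"
proof -
  assume a: "lex_less f g" "lex_less g h"
  then obtain l1 where l1: "cord_less (f l1) (g l1)" "\<forall>l'<l1. f l' = g l'" unfolding lex_less_def by blast
  obtain l2 where l2: "cord_less (g l2) (h l2)" "\<forall>l'<l2. g l' = h l'" using a unfolding lex_less_def by blast
  show ?thesis
  proof (cases "l1 < l2")
    case True thus ?thesis unfolding lex_less_def using l1 l2 by (intro exI[of _ l1]) auto
  next
    case False
    show ?thesis
    proof (cases "l1 = l2")
      case True thus ?thesis unfolding lex_less_def using l1 l2
        by (intro exI[of _ l1]) (auto dest: cord_less_def[THEN iffD1] intro: cord_less_le_trans)
    next
      case False
      hence "l2 < l1" using \<open>\<not> l1 < l2\<close> by simp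
      thus ?thesis unfolding lex_less_def using l1 l2
        by (intro exI[of _ l2]) (auto intro: cord_le_less_trans)
    qed
  qed
qed

lemma lex_less_asym: "lex_less f g \<Longrightarrow> \<not> lex_less g f"
  using lex_less_trans lex_less_irrefl by blast

lemma lex_total: "f \<noteq> g \<Longrightarrow> lex_less f g \<or> lex_less g f"
proof -
  assume "f \<noteq> g"
  then obtain l0 where "f l0 \<noteq> g l0" by blast
  define d where "d = (LEAST l. f l \<noteq> g l)"
  have d: "f d \<noteq> g d" unfolding d_def by (rule LeastI) fact
  have lt: "\<forall>l'<d. f l' = g l'" unfolding d_def using not_less_Least by blast
  have "cord_less (f d) (g d) \<or> cord_less (g d) (f d)"
    using d cord_le_total cord_le_antisym cord_less_def by metis
  thus ?thesis unfolding lex_less_def using lt by metis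
qed

lemma sig_le_refl[simp]: "sig_le a a"
  by (cases a) auto

lemma sig_le_None[simp]: "sig_le None b \<longleftrightarrow> b = None"
  by (cases b) auto

lemma sig_le_trans: "sig_le a b \<Longrightarrow> sig_le b c \<Longrightarrow> sig_le a c"
  by (cases a; cases b; cases c) (auto intro: lex_less_trans)

lemma sig_le_total: "sig_le a b \<or> sig_le b a"
  by (cases a; cases b) (auto dest: lex_total)

lemma sig_le_antisym: "sig_le a b \<Longrightarrow> sig_le b a \<Longrightarrow> a = b"
  by (cases a; cases b) (auto dest: lex_less_asym)

lemma sig_min_le1: "sig_le (sig_min a b) a" unfolding sig_min_def using sig_le_total by auto
lemma sig_min_le2: "sig_le (sig_min a b) b" unfolding sig_min_def using sig_le_total by auto
lemma sig_min_cases: "sig_min a b = a \<or> sig_min a b = b" unfolding sig_min_def by auto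
lemma sig_max_ge1: "sig_le a (sig_max a b)" unfolding sig_max_def using sig_le_total by auto
lemma sig_max_ge2: "sig_le b (sig_max a b)" unfolding sig_max_def using sig_le_total by auto
lemma sig_max_cases: "sig_max a b = a \<or> sig_max a b = b" unfolding sig_max_def by auto

lemma sig_min_mono: "sig_le a a' \<Longrightarrow> sig_le b b' \<Longrightarrow> sig_le (sig_min a b) (sig_min a' b')"
  using sig_min_cases[of a' b'] sig_min_le1 sig_min_le2 sig_le_trans by metis

lemma sig_max_mono: "sig_le a a' \<Longrightarrow> sig_le b b' \<Longrightarrow> sig_le (sig_max a b) (sig_max a' b')"
  using sig_max_cases[of a b] sig_max_ge1 sig_max_ge2 sig_le_trans by metis

lemma coord_le_sig_le:
  assumes "\<forall>l. cord_le (f l) (g l)" shows "sig_le (Some f) (Some g)"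
proof (cases "f = g")
  case False
  then obtain l0 where "f l0 \<noteq> g l0" by blast
  define d where "d = (LEAST l. f l \<noteq> g l)"
  have d: "f d \<noteq> g d" unfolding d_def by (rule LeastI) fact
  have lt: "\<forall>l'<d. f l' = g l'" unfolding d_def using not_less_Least by blast
  have "cord_less (f d) (g d)" using d assms cord_le_antisym cord_less_def by metis
  thus ?thesis unfolding sig_le.simps lex_less_def using lt by blast
qed simp

lemma lex_less_Some: "sig_le (Some f) (Some g) \<longleftrightarrow> f = g \<or> lex_less f g" by simp

lemma reset_from_mono: "sig_le (Some f) (Some g) \<Longrightarrow> sig_le (Some (reset_from j f)) (Some (reset_from j g))"
proof -
  assume "sig_le (Some f) (Some g)"
  hence "f = g \<or> lex_less f g" by simp
  thus ?thesis
  proof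
    assume "lex_less f g"
    then obtain l where l: "cord_less (f l) (g l)" "\<forall>l'<l. f l' = g l'" unfolding lex_less_def by blast
    show ?thesis
    proof (cases "l < j")
      case True
      hence "lex_less (reset_from j f) (reset_from j g)" unfolding lex_less_def reset_from_def
        using l by (intro exI[of _ l]) auto
      thus ?thesis by simp
    next
      case False
      hence "reset_from j f = reset_from j g" unfolding reset_from_def using l by auto
      thus ?thesis by simp
    qed
  qed simp
qed

lemma incr_at_mono: "sig_le (Some f) (Some g) \<Longrightarrow> sig_le (Some (incr_at j f)) (Some (incr_at j g))"
proof -
  assume "sig_le (Some f) (Some g)"
  hence "f = g \<or> lex_less f g" by simp
  thus ?thesis
  proof
    assume "lex_less f g"
    then obtain l where l: "cord_less (f l) (g l)" "\<forall>l'<l. f l' = g l'" unfolding lex_less_def by blast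
    show ?thesis
    proof (cases "l \<le> j")
      case True
      hence "lex_less (incr_at j f) (incr_at j g)" unfolding lex_less_def incr_at_def
        using l cord_succ_strict by (intro exI[of _ l]) auto
      thus ?thesis by simp
    next
      case False
      hence "incr_at j f = incr_at j g" unfolding incr_at_def using l by auto
      thus ?thesis by simp
    qed
  qed simp
qed



primrec minset :: "(nat \<Rightarrow> cord) set \<Rightarrow> nat \<Rightarrow> (nat \<Rightarrow> cord) set" where
  "minset Q 0 = Q"
| "minset Q (Suc l) = {f \<in> minset Q l. \<forall>g\<in>minset Q l. cord_le (f l) (g l)}"

lemma minset_sub: "minset Q l \<subseteq> Q"
  by (induction l) auto

lemma minset_anti: "m \<le> n \<Longrightarrow> minset Q n \<subseteq> minset Q m"
proof (induction n rule: dec_induct)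
  case base thus ?case by simp
next
  case (step n) thus ?case by auto
qed

lemma minset_ne: "f0 \<in> Q \<Longrightarrow> minset Q l \<noteq> {}"
proof (induction l)
  case 0 thus ?case by auto
next
  case (Suc l)
  then obtain f where "f \<in> minset Q l" by blast
  then obtain z where "z \<in> (\<lambda>g. g l) ` minset Q l" "\<forall>y\<in>(\<lambda>g. g l) ` minset Q l. cord_le z y"
    using cord_min_ex[of "f l" "(\<lambda>g. g l) ` minset Q l"] by blast
  thus ?case by auto
qed

lemma minset_agree: "f \<in> minset Q l \<Longrightarrow> g \<in> minset Q l \<Longrightarrow> l' < l \<Longrightarrow> f l' = g l'"
proof (induction l arbitrary: l')
  case 0 thus ?case by simp
next
  case (Suc l)
  show ?case
  proof (cases "l' < l")
    case True thus ?thesis using Suc by auto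
  next
    case False
    hence "l' = l" using Suc by simp
    thus ?thesis using Suc.prems cord_le_antisym by auto
  qed
qed

lemma lex_min_ex:
  assumes f0: "f0 \<in> Q" and supp: "\<forall>f\<in>Q. \<forall>l\<ge>K. f l = cord_zero"
  shows "\<exists>f\<in>Q. \<forall>g\<in>Q. f = g \<or> lex_less f g"
proof -
  obtain f where f: "f \<in> minset Q K" using minset_ne[OF f0, of K] by blast
  have fQ: "f \<in> Q" using f minset_sub by blast
  have "\<forall>g\<in>Q. f = g \<or> lex_less f g"
  proof
    fix g assume gQ: "g \<in> Q"
    show "f = g \<or> lex_less f g"
    proof (cases "f = g")
      case False
      then obtain l0 where "f l0 \<noteq> g l0" by blast
      define d where "d = (LEAST l. f l \<noteq> g l)"
      have d: "f d \<noteq> g d" unfolding d_def by (rule LeastI) fact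
      have lt: "\<forall>l'<d. f l' = g l'" unfolding d_def using not_less_Least by blast
      have dK: "d < K" using d supp fQ gQ by (metis not_less)
      have fall: "\<And>m. m \<le> K \<Longrightarrow> f \<in> minset Q m" using f minset_anti by blast
      have gin: "\<And>l. l \<le> d \<Longrightarrow> g \<in> minset Q l"
      proof -
        fix l show "l \<le> d \<Longrightarrow> g \<in> minset Q l"
        proof (induction l)
          case 0 thus ?case using gQ by simp
        next
          case (Suc l)
          have "Suc l \<le> K" using Suc.prems dK by simp
          hence fl: "f \<in> minset Q (Suc l)" using fall by blast
          have "g l = f l" using lt Suc.prems by simp
          thus ?case using fl Suc by simp
        qed
      qed
      have "Suc d \<le> K" using dK by simp
      hence fd: "f \<in> minset Q (Suc d)" using fall by blast
      have "cord_le (f d) (g d)" using fd gin[of d] by simp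
      hence "cord_less (f d) (g d)" using d cord_le_antisym cord_less_def by metis
      thus ?thesis unfolding lex_less_def using lt by blast
    qed simp
  qed
  thus ?thesis using fQ by blast
qed

lemma sig_min_ex:
  assumes "x \<in> Q" and supp: "\<forall>f. Some f \<in> Q \<longrightarrow> (\<forall>l\<ge>K. f l = cord_zero)"
  shows "\<exists>z\<in>Q. \<forall>y\<in>Q. sig_le z y"
proof (cases "\<exists>f. Some f \<in> Q")
  case True
  then obtain f0 where "f0 \<in> {f. Some f \<in> Q}" by blast
  then obtain f where f: "f \<in> {f. Some f \<in> Q}" "\<forall>g\<in>{f. Some f \<in> Q}. f = g \<or> lex_less f g"
    using lex_min_ex[of f0 "{f. Some f \<in> Q}" K] supp by blast
  have "\<forall>y\<in>Q. sig_le (Some f) y"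
  proof
    fix y assume "y \<in> Q" thus "sig_le (Some f) y" using f by (cases y) auto
  qed
  thus ?thesis using f by blast
next
  case False
  hence "Q = {None}" using assms(1) by (metis not_None_eq singleton_iff subsetI subset_singletonD empty_iff)
  thus ?thesis by simp
qed



definition st :: "tree \<Rightarrow> nat list \<Rightarrow> tree" where
  "st t u = (\<lambda>v. t (u @ v))"

definition cat :: "nat list \<Rightarrow> (nat \<Rightarrow> nat) \<Rightarrow> (nat \<Rightarrow> nat)" where
  "cat u b = (\<lambda>m. if m < length u then u ! m else b (m - length u))"

definition shft :: "(nat \<Rightarrow> nat) \<Rightarrow> nat \<Rightarrow> (nat \<Rightarrow> nat)" where
  "shft b n = (\<lambda>m. b (m + n))"

lemma st_st[simp]: "st (st t u) v = st t (u @ v)" unfolding st_def by simp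
lemma st_Nil[simp]: "st t [] = t" unfolding st_def by simp
lemma st_app: "st t u v = t (u @ v)" unfolding st_def by simp

lemma length_pref[simp]: "length (pref b m) = m" unfolding pref_def by simp

lemma pref_add: "pref b (n + m) = pref b n @ pref (shft b n) m"
  unfolding pref_def shft_def
  by (induction m) (auto simp: add.commute)

lemma pref_Suc: "pref b (Suc m) = pref b m @ [b m]"
  unfolding pref_def by simp

lemma take_pref: "m \<le> n \<Longrightarrow> take m (pref b n) = pref b m"
  unfolding pref_def by (simp add: take_map)

lemma pref_nth: "m < n \<Longrightarrow> pref b n ! m = b m"
  unfolding pref_def by simp

lemma pref_cat_le: "m \<le> length u \<Longrightarrow> pref (cat u b) m = take m u"
  unfolding pref_def cat_def by (rule nth_equalityI) auto

lemma shft_cat[simp]: "shft (cat u b) (length u) = b"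
  unfolding shft_def cat_def by auto

lemma pref_cat: "pref (cat u b) (length u + m) = u @ pref b m"
  using pref_add[of "cat u b" "length u" m] pref_cat_le[of "length u" u b] by simp

lemma shft_shft[simp]: "shft (shft b n) m = shft b (m + n)"
  unfolding shft_def by (simp add: add.assoc)

lemma shft_0[simp]: "shft b 0 = b" unfolding shft_def by simp

lemma finite_shift_iff:
  fixes n :: nat
  shows "finite {m. P m} \<longleftrightarrow> finite {m. P (m + n)}"
proof
  assume "finite {m. P m}"
  moreover have "{m. P (m + n)} \<subseteq> (\<lambda>m. m - n) ` {m. P m}"
  proof
    fix x assume "x \<in> {m. P (m + n)}"
    thus "x \<in> (\<lambda>m. m - n) ` {m. P m}" by (intro image_eqI[where x = "x + n"]) auto
  qed
  ultimately show "finite {m. P (m + n)}" using finite_surj by blast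
next
  assume "finite {m. P (m + n)}"
  hence "finite ((\<lambda>m. m + n) ` {m. P (m + n)})" by simp
  moreover have "{m. P m} \<subseteq> {..<n} \<union> (\<lambda>m. m + n) ` {m. P (m + n)}"
  proof
    fix x assume x: "x \<in> {m. P m}"
    show "x \<in> {..<n} \<union> (\<lambda>m. m + n) ` {m. P (m + n)}"
    proof (cases "x < n")
      case False thus ?thesis using x by (intro UnI2 image_eqI[where x = "x - n"]) auto
    qed simp
  qed
  ultimately show "finite {m. P m}" using finite_subset by blast
qed

lemma is_tree_prefix:
  assumes T: "is_tree i k t" and "t (u @ v) \<noteq> None" shows "t u \<noteq> None"
  using assms(2)
proof (induction v rule: rev_induct)
  case Nil thus ?case by simp
next
  case (snoc x xs)
  thus ?case using T unfolding is_tree_def by (metis append_assoc)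
qed

lemma is_tree_st:
  assumes T: "is_tree i k t" and "t u \<noteq> None" shows "is_tree i k (st t u)"
  using assms unfolding is_tree_def st_def by (metis append_assoc append_Nil2)


lemma is_branch_cat:
  assumes T: "is_tree i k t" and u: "t u \<noteq> None" and b: "is_branch (st t u) b"
  shows "is_branch t (cat u b)"
  unfolding is_branch_def
proof
  fix m
  show "t (pref (cat u b) m) \<noteq> None"
  proof (cases "m \<le> length u")
    case True
    hence "pref (cat u b) m = take m u" by (rule pref_cat_le)
    thus ?thesis using is_tree_prefix[OF T, of "take m u" "drop m u"] u by simp
  next
    case False
    then obtain m' where "m = length u + m'" by (metis le_add_diff_inverse nat_le_linear)
    thus ?thesis using b pref_cat[of u b m'] unfolding is_branch_def st_def by simp
  qed
qed

lemma is_branch_shft: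
  assumes "is_branch t b" shows "is_branch (st t (pref b n)) (shft b n)"
  using assms unfolding is_branch_def st_def by (metis pref_add)


lemma well_formed_st:
  assumes W: "well_formed i k t" and u: "t u \<noteq> None" shows "well_formed i k (st t u)"
  unfolding well_formed_def
proof (intro conjI allI impI)
  show T': "is_tree i k (st t u)" using is_tree_st W u unfolding well_formed_def by blast
  fix b assume b: "is_branch (st t u) b"
  have T: "is_tree i k t" using W unfolding well_formed_def by blast
  have "is_branch t (cat u b)" using is_branch_cat[OF T u b] .
  hence "finite {m. t (pref (cat u b) m) = Some Sim}" using W unfolding well_formed_def by blast
  hence "finite {m. t (pref (cat u b) (m + length u)) = Some Sim}"
    using finite_shift_iff[of "\<lambda>m. t (pref (cat u b) m) = Some Sim" "length u"] by simp
  moreover have "\<And>m. pref (cat u b) (m + length u) = u @ pref b m"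
    using pref_cat by (metis add.commute)
  ultimately show "finite {m. st t u (pref b m) = Some Sim}" unfolding st_def by simp
qed




definition sw_cnt :: "tree \<Rightarrow> nat list \<Rightarrow> nat" where
  "sw_cnt t u = card {m. m < length u \<and> t (take m u) = Some Sim}"

lemma switched_sw: "switched t u \<longleftrightarrow> odd (sw_cnt t u)"
  unfolding switched_def sw_cnt_def ..

lemma sw_cnt_app: "sw_cnt t (u @ v) = sw_cnt t u + sw_cnt (st t u) v"
proof -
  let ?A = "{m. m < length u \<and> t (take m u) = Some Sim}"
  let ?C = "{m. m < length v \<and> t (u @ take m v) = Some Sim}"
  let ?B = "(\<lambda>m. m + length u) ` ?C"
  have eq: "{m. m < length (u @ v) \<and> t (take m (u @ v)) = Some Sim} = ?A \<union> ?B"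
  proof (rule set_eqI)
    fix x
    show "x \<in> {m. m < length (u @ v) \<and> t (take m (u @ v)) = Some Sim} \<longleftrightarrow> x \<in> ?A \<union> ?B"
    proof (cases "x < length u")
      case True thus ?thesis by auto
    next
      case False
      hence "x = (x - length u) + length u" by simp
      thus ?thesis using False by (auto simp: image_iff intro!: exI[of _ "x - length u"])
    qed
  qed
  have "card (?A \<union> ?B) = card ?A + card ?B"
    by (rule card_Un_disjoint) auto
  moreover have "card ?B = card ?C" by (rule card_image) (auto simp: inj_on_def)
  ultimately show ?thesis unfolding sw_cnt_def eq st_def by simp
qed

lemma sw_cnt_Nil[simp]: "sw_cnt t [] = 0" unfolding sw_cnt_def by simp

lemma sw_cnt_single: "sw_cnt t [n] = (if t [] = Some Sim then 1 else 0)"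
proof -
  have "{m. m < length [n] \<and> t (take m [n]) = Some Sim} = (if t [] = Some Sim then {0} else {})" by auto
  thus ?thesis unfolding sw_cnt_def by simp
qed

lemma switched_app: "even (sw_cnt t u) \<Longrightarrow> switched t (u @ v) \<longleftrightarrow> switched (st t u) v"
  unfolding switched_sw sw_cnt_app by simp

lemma controls_app: "even (sw_cnt t u) \<Longrightarrow> controls t P (u @ v) \<longleftrightarrow> controls (st t u) P v"
  unfolding controls_def using switched_app[of t u v] by (simp add: st_def)

lemma ev_switched_shift:
  assumes "even (sw_cnt t (pref b n))"
  shows "eventually_switched t b \<longleftrightarrow> eventually_switched (st t (pref b n)) (shft b n)"
proof -
  have sw: "\<And>m. switched t (pref b (n + m)) \<longleftrightarrow> switched (st t (pref b n)) (pref (shft b n) m)"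
    using switched_app[OF assms] pref_add by metis
  show ?thesis unfolding eventually_switched_def
  proof
    assume "\<exists>N. \<forall>m\<ge>N. switched t (pref b m)"
    then obtain N where "\<forall>m\<ge>N. switched t (pref b m)" by blast
    have "\<forall>m\<ge>N. switched (st t (pref b n)) (pref (shft b n) m)"
    proof (intro allI impI)
      fix m assume "m \<ge> N"
      hence "switched t (pref b (n + m))" using \<open>\<forall>m\<ge>N. switched t (pref b m)\<close> by simp
      thus "switched (st t (pref b n)) (pref (shft b n) m)" using sw by simp
    qed
    thus "\<exists>N. \<forall>m\<ge>N. switched (st t (pref b n)) (pref (shft b n) m)" by blast
  next
    assume "\<exists>N. \<forall>m\<ge>N. switched (st t (pref b n)) (pref (shft b n) m)"
    then obtain N where N: "\<forall>m\<ge>N. switched (st t (pref b n)) (pref (shft b n) m)" by blast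
    have "\<forall>m\<ge>N + n. switched t (pref b m)"
    proof (intro allI impI)
      fix m assume "m \<ge> N + n"
      hence "m = n + (m - n)" "m - n \<ge> N" by auto
      thus "switched t (pref b m)" using N sw by metis
    qed
    thus "\<exists>N. \<forall>m\<ge>N. switched t (pref b m)" by blast
  qed
qed

lemma inf_shift:
  "infinite {m. t (pref b m) = x} \<longleftrightarrow> infinite {m. st t (pref b n) (pref (shft b n) m) = x}"
proof -
  have "\<And>m. st t (pref b n) (pref (shft b n) m) = t (pref b (m + n))"
    unfolding st_def using pref_add by (metis add.commute)
  thus ?thesis using finite_shift_iff[of "\<lambda>m. t (pref b m) = x" n] by simp
qed

lemma min_inf_prio_shift:
  "min_inf_prio k t b = min_inf_prio k (st t (pref b n)) (shft b n)"
  unfolding min_inf_prio_def using inf_shift[of t b] by presburger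

lemma wins_play_shift:
  assumes "even (sw_cnt t (pref b n))"
  shows "wins_play k t P b \<longleftrightarrow> wins_play k (st t (pref b n)) P (shft b n)"
  unfolding wins_play_def using ev_switched_shift[OF assms] min_inf_prio_shift[of k t b n] by simp

definition wstrat :: "nat \<Rightarrow> tree \<Rightarrow> player \<Rightarrow> (nat list \<Rightarrow> nat) \<Rightarrow> bool" where
  "wstrat k t P s \<longleftrightarrow> strategy t P s \<and> (\<forall>b. is_branch t b \<and> consistent t P s b \<longrightarrow> wins_play k t P b)"

lemma wins_wstrat: "wins k t P \<longleftrightarrow> (\<exists>s. wstrat k t P s)"
  unfolding wins_def wstrat_def ..

definition cons_pref :: "tree \<Rightarrow> player \<Rightarrow> (nat list \<Rightarrow> nat) \<Rightarrow> nat list \<Rightarrow> bool" where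
  "cons_pref t P s u \<longleftrightarrow> (\<forall>m<length u. controls t P (take m u) \<longrightarrow> u ! m = s (take m u))"

lemma wstrat_sub:
  assumes T: "is_tree i k t" and W: "wstrat k t P s" and u: "t u \<noteq> None"
    and cp: "cons_pref t P s u" and ev: "even (sw_cnt t u)"
  shows "wstrat k (st t u) P (\<lambda>v. s (u @ v))"
  unfolding wstrat_def
proof (intro conjI allI impI)
  show "strategy (st t u) P (\<lambda>v. s (u @ v))"
    unfolding strategy_def
  proof (intro allI impI)
    fix v assume a: "st t u v \<noteq> None \<and> controls (st t u) P v"
    hence "t (u @ v) \<noteq> None \<and> controls t P (u @ v)" using controls_app[OF ev] by (simp add: st_def)
    hence "t ((u @ v) @ [s (u @ v)]) \<noteq> None" using W unfolding wstrat_def strategy_def by blast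
    thus "st t u (v @ [s (u @ v)]) \<noteq> None" by (simp add: st_def)
  qed
  fix b assume b: "is_branch (st t u) b \<and> consistent (st t u) P (\<lambda>v. s (u @ v)) b"
  let ?b = "cat u b"
  have br: "is_branch t ?b" using is_branch_cat[OF T u] b by blast
  have co: "consistent t P s ?b" unfolding consistent_def
  proof (intro allI impI)
    fix m assume c: "controls t P (pref ?b m)"
    show "?b m = s (pref ?b m)"
    proof (cases "m < length u")
      case True
      hence "pref ?b m = take m u" by (simp add: pref_cat_le)
      thus ?thesis using cp c True unfolding cons_pref_def cat_def by simp
    next
      case False
      then obtain m' where m': "m = length u + m'" by (metis le_add_diff_inverse not_less)
      have "controls (st t u) P (pref b m')" using c controls_app[OF ev] pref_cat m' by metis
      hence "b m' = s (u @ pref b m')" using b unfolding consistent_def by blast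
      thus ?thesis using m' pref_cat by (simp add: cat_def)
    qed
  qed
  have "wins_play k t P ?b" using W br co unfolding wstrat_def by blast
  moreover have "pref ?b (length u) = u" using pref_cat_le[of "length u" u b] by simp
  ultimately show "wins_play k (st t u) P b"
    using wins_play_shift[of t ?b "length u" k P] ev by simp
qed



lemma unary_root[simp]: "unary a t [] = Some a" unfolding unary_def by simp
lemma binary_root[simp]: "binary a l r [] = Some a" unfolding binary_def by simp
lemma st_unary[simp]: "st (unary a t) [0] = t" unfolding unary_def st_def by simp
lemma st_binary0[simp]: "st (binary a l r) [0] = l" unfolding binary_def st_def by simp
lemma st_binary1[simp]: "st (binary a l r) [Suc 0] = r" unfolding binary_def st_def by simp

lemma pref_one: "pref b (Suc 0) = [b 0]" unfolding pref_def by simp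

lemma wf_from_children:
  assumes T: "is_tree i k T" and ch: "\<And>n. T [n] \<noteq> None \<Longrightarrow> well_formed i k (st T [n])"
  shows "well_formed i k T"
  unfolding well_formed_def
proof (intro conjI allI impI)
  show "is_tree i k T" by fact
  fix b assume b: "is_branch T b"
  have "T [b 0] \<noteq> None" using b pref_one unfolding is_branch_def by metis
  hence W: "well_formed i k (st T (pref b 1))" using ch pref_one by simp
  have "is_branch (st T (pref b 1)) (shft b 1)" using is_branch_shft[OF b] .
  hence "finite {m. st T (pref b 1) (pref (shft b 1) m) = Some Sim}" using W unfolding well_formed_def by blast
  thus "finite {m. T (pref b m) = Some Sim}" using inf_shift[of T b "Some Sim" 1] by simp
qed

lemma tree_root: "is_tree i k t \<Longrightarrow> \<exists>a. t [] = Some a" unfolding is_tree_def by auto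

lemma tree_child: "is_tree i k T \<Longrightarrow> T [] = Some a \<Longrightarrow> T [n] \<noteq> None \<longleftrightarrow> n < arity a"
  unfolding is_tree_def by (metis append_Nil)

lemma tree_node_child: "is_tree i k T \<Longrightarrow> T u = Some a \<Longrightarrow> T (u @ [n]) \<noteq> None \<longleftrightarrow> n < arity a"
  unfolding is_tree_def by metis

lemma tree_alph: "is_tree i k T \<Longrightarrow> T u = Some a \<Longrightarrow> in_alph i k a"
  unfolding is_tree_def by blast

lemma is_tree_unary:
  assumes T: "is_tree i k t" and a: "in_alph i k a" "arity a = 1"
  shows "is_tree i k (unary a t)"
  unfolding is_tree_def
proof (intro conjI)
  show "unary a t [] \<noteq> None" by simp
  show "\<forall>u n. unary a t (u @ [n]) \<noteq> None \<longrightarrow> unary a t u \<noteq> None"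
  proof (intro allI impI)
    fix u n assume h: "unary a t (u @ [n]) \<noteq> None"
    show "unary a t u \<noteq> None"
    proof (cases u)
      case Nil thus ?thesis by simp
    next
      case (Cons m v)
      hence "m = 0 \<and> t (v @ [n]) \<noteq> None" using h unfolding unary_def by (auto split: if_splits)
      thus ?thesis using Cons is_tree_prefix[OF T, of v "[n]"] unfolding unary_def by auto
    qed
  qed
  show "\<forall>u c. unary a t u = Some c \<longrightarrow> in_alph i k c \<and> (\<forall>n. unary a t (u @ [n]) \<noteq> None \<longleftrightarrow> n < arity c)"
  proof (intro allI impI)
    fix u c assume uc: "unary a t u = Some c"
    show "in_alph i k c \<and> (\<forall>n. unary a t (u @ [n]) \<noteq> None \<longleftrightarrow> n < arity c)"
    proof (cases u)
      case Nil
      have "t [] \<noteq> None" using T unfolding is_tree_def by blast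
      thus ?thesis using uc a Nil unfolding unary_def by auto
    next
      case (Cons m v)
      hence "m = 0" "t v = Some c" using uc unfolding unary_def by (auto split: if_splits)
      thus ?thesis using Cons tree_node_child[OF T, of v c] tree_alph[OF T, of v c] unfolding unary_def by auto
    qed
  qed
qed

lemma is_tree_binary:
  assumes L: "is_tree i k l" and R: "is_tree i k r" and a: "in_alph i k a" "arity a = 2"
  shows "is_tree i k (binary a l r)"
  unfolding is_tree_def
proof (intro conjI)
  show "binary a l r [] \<noteq> None" by simp
  show "\<forall>u n. binary a l r (u @ [n]) \<noteq> None \<longrightarrow> binary a l r u \<noteq> None"
  proof (intro allI impI)
    fix u n assume h: "binary a l r (u @ [n]) \<noteq> None"
    show "binary a l r u \<noteq> None"
    proof (cases u)
      case Nil thus ?thesis by simp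
    next
      case (Cons m v)
      hence "(m = 0 \<and> l (v @ [n]) \<noteq> None) \<or> (m = 1 \<and> r (v @ [n]) \<noteq> None)"
        using h unfolding binary_def by (auto split: if_splits)
      thus ?thesis using Cons is_tree_prefix[OF L, of v "[n]"] is_tree_prefix[OF R, of v "[n]"]
        unfolding binary_def by auto
    qed
  qed
  show "\<forall>u c. binary a l r u = Some c \<longrightarrow> in_alph i k c \<and> (\<forall>n. binary a l r (u @ [n]) \<noteq> None \<longleftrightarrow> n < arity c)"
  proof (intro allI impI)
    fix u c assume uc: "binary a l r u = Some c"
    show "in_alph i k c \<and> (\<forall>n. binary a l r (u @ [n]) \<noteq> None \<longleftrightarrow> n < arity c)"
    proof (cases u)
      case Nil
      have "l [] \<noteq> None" "r [] \<noteq> None" using L R unfolding is_tree_def by blast+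
      thus ?thesis using uc a Nil unfolding binary_def by (auto simp: less_Suc_eq numeral_2_eq_2)
    next
      case (Cons m v)
      hence "(m = 0 \<and> l v = Some c) \<or> (m = 1 \<and> r v = Some c)" using uc unfolding binary_def by (auto split: if_splits)
      thus ?thesis using Cons tree_node_child[OF L, of v c] tree_node_child[OF R, of v c]
        tree_alph[OF L, of v c] tree_alph[OF R, of v c] unfolding binary_def by auto
    qed
  qed
qed

lemma wf_unary:
  assumes W: "well_formed i k t" and a: "in_alph i k a" "arity a = 1"
  shows "well_formed i k (unary a t)"
proof (rule wf_from_children)
  show "is_tree i k (unary a t)" using is_tree_unary W a unfolding well_formed_def by blast
  fix n assume "unary a t [n] \<noteq> None"
  hence "n = 0" unfolding unary_def by (auto split: if_splits)
  thus "well_formed i k (st (unary a t) [n])" using W by simp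
qed

lemma wf_binary:
  assumes L: "well_formed i k l" and R: "well_formed i k r" and a: "in_alph i k a" "arity a = 2"
  shows "well_formed i k (binary a l r)"
proof (rule wf_from_children)
  show "is_tree i k (binary a l r)" using is_tree_binary L R a unfolding well_formed_def by blast
  fix n assume "binary a l r [n] \<noteq> None"
  hence "n = 0 \<or> n = 1" unfolding binary_def by (auto split: if_splits)
  thus "well_formed i k (st (binary a l r) [n])" using L R by auto
qed


lemma tree_deep_None:
  assumes T: "is_tree i k T" and "T [n] = None" shows "T (n # v) = None"
  using is_tree_prefix[OF T, of "[n]" v] assms(2) by (metis append_Cons append_Nil)

lemma decomp_unary:
  assumes T: "is_tree i k T" and r: "T [] = Some a" and ar: "arity a = 1"
  shows "T = unary a (st T [0])"
proof
  fix u show "T u = unary a (st T [0]) u"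
  proof (cases u)
    case Nil thus ?thesis using r by simp
  next
    case (Cons n v)
    show ?thesis
    proof (cases "n = 0")
      case True thus ?thesis using Cons unfolding unary_def st_def by simp
    next
      case False
      hence "T [n] = None" using tree_child[OF T r, of n] ar by simp
      thus ?thesis using tree_deep_None[OF T] Cons False unfolding unary_def by simp
    qed
  qed
qed

lemma decomp_binary:
  assumes T: "is_tree i k T" and r: "T [] = Some a" and ar: "arity a = 2"
  shows "T = binary a (st T [0]) (st T [1])"
proof
  fix u show "T u = binary a (st T [0]) (st T [1]) u"
  proof (cases u)
    case Nil thus ?thesis using r by simp
  next
    case (Cons n v)
    show ?thesis
    proof (cases "n = 0 \<or> n = 1")
      case True thus ?thesis using Cons unfolding binary_def st_def by auto
    next
      case False
      hence "T [n] = None" using tree_child[OF T r, of n] ar by simp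
      thus ?thesis using tree_deep_None[OF T] Cons False unfolding binary_def by simp
    qed
  qed
qed

lemma arity_cases: "arity a = 1 \<or> arity a = 2"
  by (cases a) auto



lemma controls_root: "controls T P [] \<longleftrightarrow> T [] = Some (cP P)"
  unfolding controls_def switched_def by simp

lemma cP_opp_ne: "cP P \<noteq> cP (opp P)" by (cases P) auto
lemma cP_ne_Sim: "cP P \<noteq> Sim" by (cases P) auto
lemma cP_arity: "arity (cP P) = 2" by (cases P) auto
lemma cP_alph: "in_alph i k (cP P)" unfolding in_alph_def by (cases P) auto

lemma wins_down:
  assumes T: "is_tree i k T" and r: "T [] = Some a" "a \<noteq> Sim" and W: "wins k T P"
  shows "\<not> controls T P [] \<Longrightarrow> T [n] \<noteq> None \<Longrightarrow> wins k (st T [n]) P"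
    and "\<exists>n. T [n] \<noteq> None \<and> wins k (st T [n]) P"
proof -
  obtain s where s: "wstrat k T P s" using W wins_wstrat by blast
  have ev: "\<And>n. even (sw_cnt T [n])" using r by (simp add: sw_cnt_single)
  have main: "\<And>n. T [n] \<noteq> None \<Longrightarrow> (controls T P [] \<longrightarrow> n = s []) \<Longrightarrow> wins k (st T [n]) P"
  proof -
    fix n assume n: "T [n] \<noteq> None" "controls T P [] \<longrightarrow> n = s []"
    have "cons_pref T P s [n]" unfolding cons_pref_def using n(2) by simp
    thus "wins k (st T [n]) P" using wstrat_sub[OF T s n(1) _ ev] wins_wstrat by blast
  qed
  show "\<not> controls T P [] \<Longrightarrow> T [n] \<noteq> None \<Longrightarrow> wins k (st T [n]) P" using main by blast
  show "\<exists>n. T [n] \<noteq> None \<and> wins k (st T [n]) P"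
  proof (cases "controls T P []")
    case True
    have "T ([] @ [s []]) \<noteq> None" using s True r unfolding wstrat_def strategy_def by blast
    thus ?thesis using main True by auto
  next
    case False
    have "T [0] \<noteq> None" using tree_child[OF T r(1), of 0] by (cases a) auto
    thus ?thesis using main False by blast
  qed
qed

lemma wins_up:
  assumes T: "is_tree i k T" and r: "T [] = Some a" "a \<noteq> Sim"
    and c0: "c0 \<in> C" "T [c0] \<noteq> None" and WC: "\<And>n. n \<in> C \<Longrightarrow> wins k (st T [n]) P"
    and all: "\<not> controls T P [] \<Longrightarrow> (\<forall>n. T [n] \<noteq> None \<longrightarrow> n \<in> C)"
  shows "wins k T P"
proof -
  define ss where "ss = (\<lambda>n. SOME s. wstrat k (st T [n]) P s)"
  have ss: "\<And>n. n \<in> C \<Longrightarrow> wstrat k (st T [n]) P (ss n)"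
    unfolding ss_def using WC wins_wstrat by (metis someI_ex)
  define s where "s = (\<lambda>u. case u of [] \<Rightarrow> c0 | n # v \<Rightarrow> (if n \<in> C then ss n v else 0))"
  have ev: "\<And>n. even (sw_cnt T [n])" using r by (simp add: sw_cnt_single)
  have strat: "strategy T P s" unfolding strategy_def
  proof (intro allI impI)
    fix u assume u: "T u \<noteq> None \<and> controls T P u"
    show "T (u @ [s u]) \<noteq> None"
    proof (cases u)
      case Nil thus ?thesis using c0 unfolding s_def by simp
    next
      case (Cons n v)
      show ?thesis
      proof (cases "n \<in> C")
        case True
        have "controls (st T [n]) P v" using u Cons controls_app[OF ev[of n], of P v] by simp
        moreover have "st T [n] v \<noteq> None" using u Cons by (simp add: st_def)
        ultimately have "st T [n] (v @ [ss n v]) \<noteq> None" using ss[OF True] unfolding wstrat_def strategy_def by blast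
        thus ?thesis using Cons True unfolding s_def st_def by simp
      next
        case False
        obtain b where "T u = Some b" using u by blast
        hence "T (u @ [0]) \<noteq> None" using tree_node_child[OF T, of u b 0] by (cases b) auto
        thus ?thesis using Cons False unfolding s_def by simp
      qed
    qed
  qed
  have "\<forall>b. is_branch T b \<and> consistent T P s b \<longrightarrow> wins_play k T P b"
  proof (intro allI impI)
    fix b assume b: "is_branch T b \<and> consistent T P s b"
    let ?n = "b 0"
    have p1: "pref b 1 = [?n]" using pref_one by simp
    have bn: "T [?n] \<noteq> None" using b p1 unfolding is_branch_def by metis
    have nC: "?n \<in> C"
    proof (cases "controls T P []")
      case True
      hence "b 0 = s (pref b 0)" using b unfolding consistent_def by (metis pref_def list.simps(8) upt_0)
      thus ?thesis using c0 unfolding s_def pref_def by simp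
    next
      case False thus ?thesis using all bn by blast
    qed
    have br: "is_branch (st T [?n]) (shft b 1)" using is_branch_shft[OF conjunct1[OF b], of 1] p1 by simp
    have co: "consistent (st T [?n]) P (ss ?n) (shft b 1)" unfolding consistent_def
    proof (intro allI impI)
      fix m assume c: "controls (st T [?n]) P (pref (shft b 1) m)"
      have pe: "pref b (1 + m) = [?n] @ pref (shft b 1) m" using pref_add[of b 1 m] p1 by simp
      hence "controls T P (pref b (1 + m))" using c controls_app[OF ev] by simp
      hence "b (1 + m) = s (pref b (1 + m))" using b unfolding consistent_def by blast
      thus "shft b 1 m = ss ?n (pref (shft b 1) m)" using pe nC unfolding s_def shft_def by (simp add: add.commute)
    qed
    have "wins_play k (st T [?n]) P (shft b 1)" using ss[OF nC] br co unfolding wstrat_def by blast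
    thus "wins_play k T P b" using wins_play_shift[of T b 1 k P] ev p1 by simp
  qed
  thus ?thesis using strat wins_wstrat unfolding wstrat_def by blast
qed

lemma wins_unary_iff:
  assumes t: "is_tree i k t" and a: "in_alph i k a" "arity a = 1" "a \<noteq> Sim" "a \<noteq> cP P"
  shows "wins k (unary a t) P \<longleftrightarrow> wins k t P"
proof -
  have T: "is_tree i k (unary a t)" using is_tree_unary[OF t a(1,2)] .
  have nc: "\<not> controls (unary a t) P []" using a(4) controls_root by simp
  have ch: "\<And>n. unary a t [n] \<noteq> None \<longleftrightarrow> n = 0" using tree_child[OF T, of a] a(2) by simp
  show ?thesis
  proof
    assume "wins k (unary a t) P"
    thus "wins k t P" using wins_down(1)[OF T _ a(3) _ nc, of 0] ch by simp
  next
    assume "wins k t P"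
    thus "wins k (unary a t) P" using wins_up[OF T unary_root a(3), of 0 "{0}"] ch by auto
  qed
qed

lemma wins_binP:
  assumes L: "is_tree i k l" and R: "is_tree i k r"
  shows "wins k (binary (cP P) l r) P \<longleftrightarrow> wins k l P \<or> wins k r P"
proof -
  let ?T = "binary (cP P) l r"
  have T: "is_tree i k ?T" using is_tree_binary[OF L R cP_alph cP_arity] .
  have ch: "\<And>n. ?T [n] \<noteq> None \<longleftrightarrow> n < 2" using tree_child[OF T binary_root] cP_arity by metis
  have cr: "controls ?T P []" using controls_root by simp
  show ?thesis
  proof
    assume "wins k ?T P"
    then obtain n where n: "?T [n] \<noteq> None" "wins k (st ?T [n]) P"
      using wins_down(2)[OF T binary_root cP_ne_Sim] by blast
    have "n = 0 \<or> n = 1" using n(1) ch by auto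
    thus "wins k l P \<or> wins k r P" using n(2) by auto
  next
    assume "wins k l P \<or> wins k r P"
    thus "wins k ?T P"
    proof
      assume w: "wins k l P"
      show ?thesis
      proof (rule wins_up[OF T binary_root cP_ne_Sim, of 0 "{0}"])
        show "0 \<in> {0::nat}" by simp
        show "?T [0] \<noteq> None" using ch by simp
        show "\<And>n. n \<in> {0} \<Longrightarrow> wins k (st ?T [n]) P" using w by simp
        show "\<not> controls ?T P [] \<Longrightarrow> \<forall>n. ?T [n] \<noteq> None \<longrightarrow> n \<in> {0}" using cr by simp
      qed
    next
      assume w: "wins k r P"
      show ?thesis
      proof (rule wins_up[OF T binary_root cP_ne_Sim, of 1 "{1}"])
        show "1 \<in> {1::nat}" by simp
        show "?T [1] \<noteq> None" using ch by simp
        show "\<And>n. n \<in> {1} \<Longrightarrow> wins k (st ?T [n]) P" using w by simp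
        show "\<not> controls ?T P [] \<Longrightarrow> \<forall>n. ?T [n] \<noteq> None \<longrightarrow> n \<in> {1}" using cr by simp
      qed
    qed
  qed
qed

lemma wins_binQ:
  assumes L: "is_tree i k l" and R: "is_tree i k r"
  shows "wins k (binary (cP (opp P)) l r) P \<longleftrightarrow> wins k l P \<and> wins k r P"
proof -
  let ?T = "binary (cP (opp P)) l r"
  have T: "is_tree i k ?T" using is_tree_binary[OF L R cP_alph cP_arity] .
  have ch: "\<And>n. ?T [n] \<noteq> None \<longleftrightarrow> n < 2" using tree_child[OF T binary_root] cP_arity by metis
  have cr: "\<not> controls ?T P []" using controls_root cP_opp_ne[of P] by (simp add: eq_commute)
  show ?thesis
  proof
    assume w: "wins k ?T P"
    have "wins k (st ?T [0]) P" using wins_down(1)[OF T binary_root cP_ne_Sim w cr, of 0] ch by simp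
    moreover have "wins k (st ?T [1]) P" using wins_down(1)[OF T binary_root cP_ne_Sim w cr, of 1] ch by simp
    ultimately show "wins k l P \<and> wins k r P" by simp
  next
    assume w: "wins k l P \<and> wins k r P"
    show "wins k ?T P"
    proof (rule wins_up[OF T binary_root cP_ne_Sim, of 0 "{0, 1}"])
      show "0 \<in> {0::nat, 1}" by simp
      show "?T [0] \<noteq> None" using ch by simp
      show "\<And>n. n \<in> {0, 1} \<Longrightarrow> wins k (st ?T [n]) P" using w by auto
      show "\<not> controls ?T P [] \<Longrightarrow> \<forall>n. ?T [n] \<noteq> None \<longrightarrow> n \<in> {0, 1}" using ch by auto
    qed
  qed
qed



definition frank :: "(nat list \<times> nat list) set \<Rightarrow> nat list \<Rightarrow> cord" where
  "frank r = wfrec r (\<lambda>g u. cord_lub ((\<lambda>w. cord_succ (g w)) ` {w. (w, u) \<in> r}))"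

lemma frank_eq:
  assumes "wf r"
  shows "frank r u = cord_lub ((\<lambda>w. cord_succ (frank r w)) ` {w. (w, u) \<in> r})"
proof -
  have "frank r u = cord_lub ((\<lambda>w. cord_succ (cut (frank r) r u w)) ` {w. (w, u) \<in> r})"
    unfolding frank_def by (subst wfrec[OF assms]) simp
  also have "(\<lambda>w. cord_succ (cut (frank r) r u w)) ` {w. (w, u) \<in> r} = (\<lambda>w. cord_succ (frank r w)) ` {w. (w, u) \<in> r}"
    unfolding cut_def by auto
  finally show ?thesis .
qed

lemma frank_less:
  assumes "wf r" "(w, u) \<in> r" shows "cord_less (frank r w) (frank r u)"
proof -
  have "cord_le (cord_succ (frank r w)) (frank r u)"
    using cord_lub_countable[of "{w. (w, u) \<in> r}" "\<lambda>w. cord_succ (frank r w)"] assms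
      frank_eq[OF assms(1), of u] by simp
  thus ?thesis using cord_less_succ cord_less_le_trans by blast
qed

lemma frank_succ_le:
  assumes "wf r" "(w, u) \<in> r" shows "cord_le (cord_succ (frank r w)) (frank r u)"
  using frank_less[OF assms] cord_succ_le by blast

lemma frank_mono:
  assumes "wf r" "{w. (w, v) \<in> r} \<subseteq> {w. (w, u) \<in> r}" shows "cord_le (frank r v) (frank r u)"
proof -
  have ub: "\<forall>w\<in>{w. (w, u) \<in> r}. cord_le (cord_succ (frank r w)) (frank r u)"
    using cord_lub_countable[of "{w. (w, u) \<in> r}" "\<lambda>w. cord_succ (frank r w)"]
      frank_eq[OF assms(1), of u] by simp
  hence "\<forall>w\<in>{w. (w, v) \<in> r}. cord_le (cord_succ (frank r w)) (frank r u)" using assms(2) by blast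
  thus ?thesis
    using cord_lub_countable[of "{w. (w, v) \<in> r}" "\<lambda>w. cord_succ (frank r w)"]
      frank_eq[OF assms(1), of v] by simp
qed



definition inR :: "tree \<Rightarrow> player \<Rightarrow> (nat list \<Rightarrow> nat) \<Rightarrow> nat list \<Rightarrow> bool" where
  "inR t P s u \<longleftrightarrow> t u \<noteq> None \<and> (\<forall>m<length u. t (take m u) \<noteq> Some Sim) \<and> cons_pref t P s u"

definition okj :: "tree \<Rightarrow> nat \<Rightarrow> nat list \<Rightarrow> bool" where
  "okj t j v \<longleftrightarrow> t v \<noteq> Some Sim \<and> (\<forall>l. t v = Some (Pr l) \<longrightarrow> j \<le> l)"

definition RelJ :: "tree \<Rightarrow> player \<Rightarrow> (nat list \<Rightarrow> nat) \<Rightarrow> nat \<Rightarrow> (nat list \<times> nat list) set" where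
  "RelJ t P s j = {(w, u). inR t P s w \<and> (\<exists>d. d \<noteq> [] \<and> w = u @ d) \<and>
      (\<forall>m. length u \<le> m \<and> m < length w \<longrightarrow> okj t j (take m w)) \<and>
      (\<exists>m. length u \<le> m \<and> m < length w \<and> t (take m w) = Some (Pr j))}"

lemma inR_prefix:
  assumes T: "is_tree i k t" and R: "inR t P s (u @ v)" shows "inR t P s u"
  unfolding inR_def cons_pref_def
proof (intro conjI allI impI)
  show "t u \<noteq> None" using is_tree_prefix[OF T] R unfolding inR_def by blast
  fix m assume m: "m < length u"
  have tk: "take m (u @ v) = take m u" using m by simp
  show "t (take m u) \<noteq> Some Sim" using R m tk unfolding inR_def by (metis length_append trans_less_add1)
next
  fix m assume m: "m < length u" and c: "controls t P (take m u)"
  have tk: "take m (u @ v) = take m u" using m by simp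
  have "(u @ v) ! m = s (take m (u @ v))" using R m c tk unfolding inR_def cons_pref_def
    by (metis length_append trans_less_add1)
  thus "u ! m = s (take m u)" using m tk by (simp add: nth_append)
qed

lemma sw_cnt_inR: "inR t P s u \<Longrightarrow> sw_cnt t u = 0"
  unfolding inR_def sw_cnt_def by auto

lemma controls_inR: "inR t P s u \<Longrightarrow> controls t P u \<longleftrightarrow> t u = Some (cP P)"
  unfolding controls_def switched_sw using sw_cnt_inR by simp

lemma child_inR:
  assumes R: "inR t P s u" and a: "t u = Some a" "a \<noteq> Sim" and n: "t (u @ [n]) \<noteq> None"
    and c: "a = cP P \<Longrightarrow> n = s u"
  shows "inR t P s (u @ [n])"
  unfolding inR_def cons_pref_def
proof (intro conjI allI impI)
  show "t (u @ [n]) \<noteq> None" by fact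
  fix m assume m: "m < length (u @ [n])"
  show "t (take m (u @ [n])) \<noteq> Some Sim"
  proof (cases "m < length u")
    case True thus ?thesis using R unfolding inR_def by simp
  next
    case False hence "m = length u" using m by simp
    thus ?thesis using a by simp
  qed
next
  fix m assume m: "m < length (u @ [n])" and cm: "controls t P (take m (u @ [n]))"
  show "(u @ [n]) ! m = s (take m (u @ [n]))"
  proof (cases "m < length u")
    case True thus ?thesis using R cm unfolding inR_def cons_pref_def by (simp add: nth_append)
  next
    case False hence mu: "m = length u" using m by simp
    hence "controls t P u" using cm by simp
    hence "a = cP P" using controls_inR[OF R] a by simp
    thus ?thesis using c mu by simp
  qed
qed

lemma RelJ_edge_sub:
  assumes ok: "okj t j u" and W: "(w, u @ [n]) \<in> RelJ t P s j" shows "(w, u) \<in> RelJ t P s j"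
proof -
  obtain d where d: "d \<noteq> []" "w = (u @ [n]) @ d" using W unfolding RelJ_def by blast
  have "\<forall>m. length u \<le> m \<and> m < length w \<longrightarrow> okj t j (take m w)"
  proof (intro allI impI)
    fix m assume m: "length u \<le> m \<and> m < length w"
    show "okj t j (take m w)"
    proof (cases "m = length u")
      case True thus ?thesis using ok d by simp
    next
      case False thus ?thesis using W m unfolding RelJ_def by auto
    qed
  qed
  moreover have "\<exists>m. length u \<le> m \<and> m < length w \<and> t (take m w) = Some (Pr j)"
    using W unfolding RelJ_def by (auto intro: Suc_leD)
  ultimately show ?thesis using W d unfolding RelJ_def by auto
qed

lemma RelJ_edge_step:
  assumes R: "inR t P s (u @ [n])" and a: "t u = Some (Pr j)" shows "(u @ [n], u) \<in> RelJ t P s j"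
proof -
  have "\<forall>m. length u \<le> m \<and> m < length (u @ [n]) \<longrightarrow> okj t j (take m (u @ [n]))"
    using a unfolding okj_def by auto
  moreover have "\<exists>m. length u \<le> m \<and> m < length (u @ [n]) \<and> t (take m (u @ [n])) = Some (Pr j)"
    using a by (intro exI[of _ "length u"]) simp
  ultimately show ?thesis using R unfolding RelJ_def by auto
qed



lemma chain_prefix:
  assumes st: "\<And>n. \<exists>d. f (Suc n) = f n @ d"
  shows "n \<le> n' \<Longrightarrow> \<exists>d. f n' = f n @ d"
proof (induction n' rule: dec_induct)
  case base show ?case by simp
next
  case (step n') thus ?case using st[of n'] by auto
qed

lemma wf_RelJ:
  assumes T: "is_tree i k t" and W: "wstrat k t P s" and L: "losing P j"
  shows "wf (RelJ t P s j)"
proof (rule ccontr)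
  let ?R = "RelJ t P s j"
  assume "\<not> wf ?R"
  then obtain f where f: "\<And>n. (f (Suc n), f n) \<in> ?R" using wf_iff_no_infinite_down_chain by blast
  have stp: "\<And>n. \<exists>d. d \<noteq> [] \<and> f (Suc n) = f n @ d" using f unfolding RelJ_def by blast
  have pre: "\<And>n n'. n \<le> n' \<Longrightarrow> \<exists>d. f n' = f n @ d"
    using chain_prefix[of f] stp by blast
  have len: "\<And>n. n \<le> length (f n)"
  proof -
    fix n show "n \<le> length (f n)"
    proof (induction n)
      case (Suc n)
      obtain d where "d \<noteq> []" "f (Suc n) = f n @ d" using stp by blast
      thus ?case using Suc by (cases d) auto
    qed simp
  qed
  have nth_eq: "\<And>n n' m. n \<le> n' \<Longrightarrow> m < length (f n) \<Longrightarrow> f n' ! m = f n ! m"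
    using pre by (metis nth_append)
  define b where "b = (\<lambda>m. f (Suc m) ! m)"
  have pb: "\<And>N m. m \<le> length (f N) \<Longrightarrow> pref b m = take m (f N)"
  proof -
    fix N m assume m: "m \<le> length (f N)"
    show "pref b m = take m (f N)"
    proof (rule nth_equalityI)
      show "length (pref b m) = length (take m (f N))" using m by simp
      fix m' assume "m' < length (pref b m)"
      hence m': "m' < m" by simp
      let ?M = "max N (Suc m')"
      have "f ?M ! m' = f (Suc m') ! m'" using nth_eq[of "Suc m'" ?M m'] len[of "Suc m'"] by simp
      moreover have "f ?M ! m' = f N ! m'" using nth_eq[of N ?M m'] m m' by simp
      ultimately show "pref b m ! m' = take m (f N) ! m'" using m' unfolding b_def by (simp add: pref_nth)
    qed
  qed
  have inRf: "\<And>n. inR t P s (f n)"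
  proof -
    fix n
    have "inR t P s (f (Suc n))" using f[of n] unfolding RelJ_def by blast
    moreover obtain d where "f (Suc n) = f n @ d" using pre[of n "Suc n"] by auto
    ultimately show "inR t P s (f n)" using inR_prefix[OF T] by metis
  qed
  have pbS: "\<And>m. pref b m = take m (f (Suc m))" using pb len by (meson Suc_leD)
  have ltS: "\<And>m. m < length (f (Suc m))" using len by (meson Suc_le_lessD)
  have br: "is_branch t b" unfolding is_branch_def
  proof
    fix m
    have "t (f (Suc m)) \<noteq> None" using inRf unfolding inR_def by blast
    thus "t (pref b m) \<noteq> None" using pbS is_tree_prefix[OF T, of "take m (f (Suc m))" "drop m (f (Suc m))"] by simp
  qed
  have co: "consistent t P s b" unfolding consistent_def
  proof (intro allI impI)
    fix m assume "controls t P (pref b m)"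
    hence "controls t P (take m (f (Suc m)))" using pbS by simp
    hence "f (Suc m) ! m = s (take m (f (Suc m)))" using inRf[of "Suc m"] ltS unfolding inR_def cons_pref_def by blast
    thus "b m = s (pref b m)" using pbS unfolding b_def by simp
  qed
  have wp: "wins_play k t P b" using W br co unfolding wstrat_def by blast
  have nosim: "\<And>m. t (pref b m) \<noteq> Some Sim"
    using inRf ltS pbS unfolding inR_def by metis
  have nsw: "\<And>m. \<not> switched t (pref b m)"
  proof -
    fix m
    have "{m'. m' < m \<and> t (take m' (pref b m)) = Some Sim} = {}"
      using nosim take_pref by (auto simp: less_imp_le)
    thus "\<not> switched t (pref b m)" unfolding switched_def by (simp only: length_pref) simp
  qed
  have nes: "\<not> eventually_switched t b" unfolding eventually_switched_def using nsw by blast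
  have infj: "infinite {m. t (pref b m) = Some (Pr j)}"
    unfolding infinite_nat_iff_unbounded_le
  proof
    fix n
    obtain m where m: "length (f n) \<le> m" "m < length (f (Suc n))" "t (take m (f (Suc n))) = Some (Pr j)"
      using f[of n] unfolding RelJ_def by blast
    have "pref b m = take m (f (Suc n))" using pb m(2) by simp
    moreover have "n \<le> m" using len[of n] m(1) by simp
    ultimately show "\<exists>m\<ge>n. m \<in> {m. t (pref b m) = Some (Pr j)}" using m(3) by auto
  qed
  have okn: "\<And>n m. length (f 0) \<le> m \<Longrightarrow> m < length (f n) \<Longrightarrow> okj t j (take m (f n))"
  proof -
    fix n show "\<And>m. length (f 0) \<le> m \<Longrightarrow> m < length (f n) \<Longrightarrow> okj t j (take m (f n))"
    proof (induction n)
      case 0 thus ?case by simp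
    next
      case (Suc n)
      obtain d where d: "f (Suc n) = f n @ d" using pre[of n "Suc n"] by auto
      show ?case
      proof (cases "m < length (f n)")
        case True thus ?thesis using Suc d by simp
      next
        case False thus ?thesis using f[of n] Suc.prems unfolding RelJ_def by auto
      qed
    qed
  qed
  have okb: "\<And>m. length (f 0) \<le> m \<Longrightarrow> okj t j (pref b m)" using okn ltS pbS by metis
  have finl: "\<And>l. l < j \<Longrightarrow> finite {m. t (pref b m) = Some (Pr l)}"
  proof -
    fix l assume l: "l < j"
    have "{m. t (pref b m) = Some (Pr l)} \<subseteq> {..<length (f 0)}"
    proof
      fix m assume m: "m \<in> {m. t (pref b m) = Some (Pr l)}"
      show "m \<in> {..<length (f 0)}"
      proof (rule ccontr)
        assume "m \<notin> {..<length (f 0)}"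
        hence "okj t j (pref b m)" using okb by simp
        thus False using m l unfolding okj_def by auto
      qed
    qed
    thus "finite {m. t (pref b m) = Some (Pr l)}" using finite_subset by blast
  qed
  have mip: "min_inf_prio k t b = j"
  proof -
    have "(LEAST j'. infinite {m. t (pref b m) = Some (Pr j')}) = j"
    proof (rule Least_equality)
      show "infinite {m. t (pref b m) = Some (Pr j)}" by fact
      fix y assume "infinite {m. t (pref b m) = Some (Pr y)}"
      thus "j \<le> y" using finl by (meson not_le)
    qed
    thus ?thesis unfolding min_inf_prio_def using infj by auto
  qed
  show False using wp nes mip L unfolding wins_play_def losing_def by (cases P) auto
qed



definition sigInf :: "sig set \<Rightarrow> sig" where
  "sigInf Q = (if Q = {} then None else SOME z. z \<in> Q \<and> (\<forall>y\<in>Q. sig_le z y))"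

lemma sigInf:
  assumes "Q \<noteq> {}" and "\<forall>f. Some f \<in> Q \<longrightarrow> (\<forall>l\<ge>K. f l = cord_zero)"
  shows "sigInf Q \<in> Q \<and> (\<forall>y\<in>Q. sig_le (sigInf Q) y)"
proof -
  obtain x where "x \<in> Q" using assms(1) by blast
  hence "\<exists>z. z \<in> Q \<and> (\<forall>y\<in>Q. sig_le z y)" using sig_min_ex[of x Q K] assms(2) by blast
  hence "(SOME z. z \<in> Q \<and> (\<forall>y\<in>Q. sig_le z y)) \<in> Q \<and> (\<forall>y\<in>Q. sig_le (SOME z. z \<in> Q \<and> (\<forall>y\<in>Q. sig_le z y)) y)"
    by (rule someI_ex)
  thus ?thesis unfolding sigInf_def using assms(1) by simp
qed

lemma valid_supp: "valid_sig i k P (Some f) \<Longrightarrow> l \<ge> Suc k \<Longrightarrow> f l = cord_zero"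
  unfolding valid_sig_def by auto

definition combine :: "player \<Rightarrow> lab \<Rightarrow> sig \<Rightarrow> sig \<Rightarrow> sig" where
  "combine P c a b = (if c = cP P then sig_min a b else sig_max a b)"

definition prio_step :: "player \<Rightarrow> nat \<Rightarrow> sig \<Rightarrow> sig" where
  "prio_step P j x = (case x of None \<Rightarrow> None
      | Some \<theta> \<Rightarrow> Some (if losing P j then incr_at j \<theta> else reset_from j \<theta>))"

definition Fop :: "nat \<Rightarrow> (player \<Rightarrow> tree \<Rightarrow> sig) \<Rightarrow> player \<Rightarrow> tree \<Rightarrow> sig" where
  "Fop k x P t = (if \<not> wins k t P then None else (case t [] of
       Some Sim \<Rightarrow> Some zero_sig
     | Some (Pr j) \<Rightarrow> prio_step P j (x P (st t [0]))
     | Some C1 \<Rightarrow> combine P C1 (x P (st t [0])) (x P (st t [1]))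
     | Some C2 \<Rightarrow> combine P C2 (x P (st t [0])) (x P (st t [1]))
     | None \<Rightarrow> None))"

lemma prio_step_mono: "sig_le a b \<Longrightarrow> sig_le (prio_step P j a) (prio_step P j b)"
  unfolding prio_step_def
  by (cases a; cases b) (auto simp del: sig_le.simps simp: incr_at_mono reset_from_mono sig_le.simps(1))

lemma combine_mono: "sig_le a a' \<Longrightarrow> sig_le b b' \<Longrightarrow> sig_le (combine P c a b) (combine P c a' b')"
  unfolding combine_def using sig_min_mono sig_max_mono by auto

lemma combine_cases: "combine P c a b = a \<or> combine P c a b = b"
  unfolding combine_def using sig_min_cases sig_max_cases by auto

lemma wf_child:
  assumes W: "well_formed i k t" and r: "t [] = Some a" and n: "n < arity a"
  shows "well_formed i k (st t [n])"
proof -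
  have T: "is_tree i k t" using W unfolding well_formed_def by blast
  have "t [n] \<noteq> None" using tree_child[OF T r] n by simp
  thus ?thesis using well_formed_st[OF W] by blast
qed

lemma Fop_mono:
  assumes le: "\<And>P t. well_formed i k t \<Longrightarrow> sig_le (x P t) (y P t)" and W: "well_formed i k t"
  shows "sig_le (Fop k x P t) (Fop k y P t)"
proof -
  have T: "is_tree i k t" using W unfolding well_formed_def by blast
  obtain a where a: "t [] = Some a" using tree_root[OF T] by blast
  have c0: "sig_le (x P (st t [0])) (y P (st t [0]))" using le wf_child[OF W a, of 0] by (cases a) auto
  show ?thesis
  proof (cases a)
    case (Pr j) thus ?thesis using a c0 prio_step_mono unfolding Fop_def by auto
  next
    case C1
    have "sig_le (x P (st t [1])) (y P (st t [1]))" using le wf_child[OF W a, of 1] C1 by auto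
    thus ?thesis using a c0 C1 combine_mono unfolding Fop_def by auto
  next
    case C2
    have "sig_le (x P (st t [1])) (y P (st t [1]))" using le wf_child[OF W a, of 1] C2 by auto
    thus ?thesis using a c0 C2 combine_mono unfolding Fop_def by auto
  qed (use a in \<open>auto simp: Fop_def\<close>)
qed

lemma valid_zero: "valid_sig i k P (Some zero_sig)"
  unfolding valid_sig_def zero_sig_def by simp

lemma valid_prio_step:
  assumes v: "valid_sig i k P a" and j: "i \<le> j" "j \<le> k"
  shows "valid_sig i k P (prio_step P j a)"
proof (cases a)
  case (Some \<theta>)
  have z: "\<And>l. \<not> (i \<le> l \<and> l \<le> k \<and> losing P l) \<Longrightarrow> \<theta> l = cord_zero" using v Some unfolding valid_sig_def by auto
  show ?thesis using Some j z unfolding prio_step_def valid_sig_def incr_at_def reset_from_def by auto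
qed (simp add: prio_step_def valid_sig_def)

lemma Fop_valid:
  assumes v: "\<And>P t. well_formed i k t \<Longrightarrow> valid_sig i k P (x P t)" and W: "well_formed i k t"
  shows "valid_sig i k P (Fop k x P t)"
proof -
  have T: "is_tree i k t" using W unfolding well_formed_def by blast
  obtain a where a: "t [] = Some a" using tree_root[OF T] by blast
  have al: "in_alph i k a" using tree_alph[OF T a] .
  have c0: "valid_sig i k P (x P (st t [0]))" using v wf_child[OF W a, of 0] by (cases a) auto
  show ?thesis
  proof (cases a)
    case Sim thus ?thesis using a valid_zero unfolding Fop_def by (auto simp: valid_sig_def)
  next
    case (Pr j)
    hence "i \<le> j" "j \<le> k" using al unfolding in_alph_def by auto
    thus ?thesis using a c0 Pr valid_prio_step unfolding Fop_def by (auto simp: valid_sig_def)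
  next
    case C1
    have "valid_sig i k P (x P (st t [1]))" using v wf_child[OF W a, of 1] C1 by auto
    thus ?thesis using a c0 C1 combine_cases[of P C1 "x P (st t [0])" "x P (st t [1])"]
      unfolding Fop_def by (auto simp: valid_sig_def)
  next
    case C2
    have "valid_sig i k P (x P (st t [1]))" using v wf_child[OF W a, of 1] C2 by auto
    thus ?thesis using a c0 C2 combine_cases[of P C2 "x P (st t [0])" "x P (st t [1])"]
      unfolding Fop_def by (auto simp: valid_sig_def)
  qed
qed



definition Nm :: "nat \<Rightarrow> nat \<Rightarrow> tree \<Rightarrow> player \<Rightarrow> (nat list \<Rightarrow> nat) \<Rightarrow> nat list \<Rightarrow> nat \<Rightarrow> cord" where
  "Nm i k t P s u = (\<lambda>l. if i \<le> l \<and> l \<le> k \<and> losing P l then frank (RelJ t P s l) u else cord_zero)"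

lemma Nm_valid: "valid_sig i k P (Some (Nm i k t P s u))"
  unfolding valid_sig_def Nm_def by auto

lemma Nm_le:
  assumes T: "is_tree i k t" and S: "wstrat k t P s" and ok: "okj t l u"
  shows "cord_le (Nm i k t P s (u @ [n]) l) (Nm i k t P s u l)"
proof (cases "i \<le> l \<and> l \<le> k \<and> losing P l")
  case True
  have "{w. (w, u @ [n]) \<in> RelJ t P s l} \<subseteq> {w. (w, u) \<in> RelJ t P s l}" using RelJ_edge_sub[OF ok] by blast
  thus ?thesis using True frank_mono[OF wf_RelJ[OF T S]] unfolding Nm_def by simp
next
  case False thus ?thesis unfolding Nm_def by auto
qed

lemma Nm_succ:
  assumes T: "is_tree i k t" and S: "wstrat k t P s" and R: "inR t P s (u @ [n])"
    and a: "t u = Some (Pr j)" and j: "i \<le> j" "j \<le> k" "losing P j"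
  shows "cord_le (cord_succ (Nm i k t P s (u @ [n]) j)) (Nm i k t P s u j)"
  using frank_succ_le[OF wf_RelJ[OF T S j(3)] RelJ_edge_step[OF R a]] j unfolding Nm_def by simp

lemma prio_le:
  assumes T: "is_tree i k t" and S: "wstrat k t P s" and R: "inR t P s (u @ [n])"
    and a: "t u = Some (Pr j)" and j: "i \<le> j" "j \<le> k"
  shows "sig_le (prio_step P j (Some (Nm i k t P s (u @ [n])))) (Some (Nm i k t P s u))"
proof -
  let ?v = "Nm i k t P s (u @ [n])" and ?w = "Nm i k t P s u"
  have lt: "\<And>l. l < j \<Longrightarrow> cord_le (?v l) (?w l)"
    using Nm_le[OF T S] a unfolding okj_def by auto
  show ?thesis
  proof (cases "losing P j")
    case True
    have "\<forall>l. cord_le (incr_at j ?v l) (?w l)"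
      using lt Nm_succ[OF T S R a j True] unfolding incr_at_def by auto
    thus ?thesis using True coord_le_sig_le unfolding prio_step_def by simp
  next
    case False
    have "\<forall>l. cord_le (reset_from j ?v l) (?w l)"
      using lt unfolding reset_from_def by auto
    thus ?thesis using False coord_le_sig_le unfolding prio_step_def by simp
  qed
qed

lemma comb_edge_le:
  assumes T: "is_tree i k t" and S: "wstrat k t P s" and a: "t u = Some a" "a = C1 \<or> a = C2"
  shows "sig_le (Some (Nm i k t P s (u @ [n]))) (Some (Nm i k t P s u))"
proof -
  have "okj t l u" for l using a unfolding okj_def by auto
  thus ?thesis using Nm_le[OF T S] coord_le_sig_le by blast
qed



lemma inR_Nil: "t [] \<noteq> None \<Longrightarrow> inR t P s []"
  unfolding inR_def cons_pref_def by simp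

lemma exists_pf:
  assumes W: "well_formed i k t0" and win: "wins k t0 P"
  shows "\<exists>x. (\<forall>P' t. well_formed i k t \<longrightarrow> valid_sig i k P' (x P' t) \<and> sig_le (Fop k x P' t) (x P' t))
             \<and> x P t0 \<noteq> None"
proof -
  have T: "is_tree i k t0" using W unfolding well_formed_def by blast
  obtain s where S: "wstrat k t0 P s" using win wins_wstrat by blast
  define Q where "Q t = {Some (Nm i k t0 P s u) | u. inR t0 P s u \<and> st t0 u = t}" for t
  define x where "x P' t = (if P' = P then sigInf (Q t) else None)" for P' t
  have supp: "\<And>t. \<forall>f. Some f \<in> Q t \<longrightarrow> (\<forall>l\<ge>Suc k. f l = cord_zero)"
    unfolding Q_def using Nm_valid valid_supp by blast
  have xQ: "\<And>t. Q t \<noteq> {} \<Longrightarrow> x P t \<in> Q t \<and> (\<forall>y\<in>Q t. sig_le (x P t) y)"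
    unfolding x_def using sigInf[OF _ supp] by simp
  have xle: "\<And>u. inR t0 P s u \<Longrightarrow> sig_le (x P (st t0 u)) (Some (Nm i k t0 P s u))"
  proof -
    fix u assume "inR t0 P s u"
    hence "Some (Nm i k t0 P s u) \<in> Q (st t0 u)" unfolding Q_def by blast
    thus "sig_le (x P (st t0 u)) (Some (Nm i k t0 P s u))" using xQ by blast
  qed
  have main: "\<And>P' t. well_formed i k t \<Longrightarrow> valid_sig i k P' (x P' t) \<and> sig_le (Fop k x P' t) (x P' t)"
  proof -
    fix P' t assume Wt: "well_formed i k t"
    show "valid_sig i k P' (x P' t) \<and> sig_le (Fop k x P' t) (x P' t)"
    proof (cases "P' = P \<and> Q t \<noteq> {}")
      case False
      hence "x P' t = None" unfolding x_def sigInf_def by auto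
      thus ?thesis by (simp add: valid_sig_def)
    next
      case True
      hence PP: "P' = P" by simp
      obtain u where u: "inR t0 P s u" "st t0 u = t" "x P t = Some (Nm i k t0 P s u)"
        using xQ[of t] True unfolding Q_def by blast
      obtain a where a: "t0 u = Some a" using u(1) unfolding inR_def by blast
      have ta: "t [] = Some a" using a u(2) by (auto simp: st_def)
      have ev: "even (sw_cnt t0 u)" using sw_cnt_inR[OF u(1)] by simp
      have "wins k t P" using wstrat_sub[OF T S _ _ ev] u(1,2) wins_wstrat unfolding inR_def by blast
      hence Fe: "Fop k x P t = (case t [] of
       Some Sim \<Rightarrow> Some zero_sig
     | Some (Pr j) \<Rightarrow> prio_step P j (x P (st t [0]))
     | Some C1 \<Rightarrow> combine P C1 (x P (st t [0])) (x P (st t [1]))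
     | Some C2 \<Rightarrow> combine P C2 (x P (st t [0])) (x P (st t [1]))
     | None \<Rightarrow> None)" unfolding Fop_def by simp
      have stc: "\<And>n. st t [n] = st t0 (u @ [n])" using u(2) by auto
      have combo: "a = C1 \<or> a = C2 \<Longrightarrow> sig_le (combine P a (x P (st t [0])) (x P (st t [1]))) (Some (Nm i k t0 P s u))"
      proof -
        assume ac: "a = C1 \<or> a = C2"
        have ar: "arity a = 2" using ac by auto
        show ?thesis
        proof (cases "a = cP P")
          case True
          have "controls t0 P u" using controls_inR[OF u(1)] a True by simp
          hence c: "t0 (u @ [s u]) \<noteq> None" using S a unfolding wstrat_def strategy_def by auto
          have n2: "s u < 2" using tree_node_child[OF T a, of "s u"] ar c by simp
          have Rn: "inR t0 P s (u @ [s u])" using child_inR[OF u(1) a _ c] ac by auto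
          have "sig_le (combine P a (x P (st t [0])) (x P (st t [1]))) (x P (st t [s u]))"
          proof (cases "s u = 0")
            case True thus ?thesis using \<open>a = cP P\<close> sig_min_le1 unfolding combine_def by simp
          next
            case False hence "s u = 1" using n2 by simp
            thus ?thesis using \<open>a = cP P\<close> sig_min_le2 unfolding combine_def by simp
          qed
          moreover have "sig_le (x P (st t [s u])) (Some (Nm i k t0 P s (u @ [s u])))" using xle[OF Rn] stc by simp
          moreover have "sig_le (Some (Nm i k t0 P s (u @ [s u]))) (Some (Nm i k t0 P s u))"
            using comb_edge_le[OF T S a ac] .
          ultimately show ?thesis using sig_le_trans by blast
        next
          case False
          have c0: "t0 (u @ [0]) \<noteq> None" "t0 (u @ [1]) \<noteq> None" using tree_node_child[OF T a] ar by auto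
          have R0: "inR t0 P s (u @ [0])" using child_inR[OF u(1) a _ c0(1)] ac False by auto
          have R1: "inR t0 P s (u @ [1])" using child_inR[OF u(1) a _ c0(2)] ac False by auto
          have "sig_le (combine P a (x P (st t [0])) (x P (st t [1])))
                  (sig_max (Some (Nm i k t0 P s (u @ [0]))) (Some (Nm i k t0 P s (u @ [1]))))"
            using False sig_max_mono xle[OF R0] xle[OF R1] stc unfolding combine_def by simp
          moreover have "sig_le (sig_max (Some (Nm i k t0 P s (u @ [0]))) (Some (Nm i k t0 P s (u @ [1])))) (Some (Nm i k t0 P s u))"
            using sig_max_cases comb_edge_le[OF T S a ac] by metis
          ultimately show ?thesis using sig_le_trans by blast
        qed
      qed
      have le: "sig_le (Fop k x P t) (Some (Nm i k t0 P s u))"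
      proof (cases a)
        case Sim
        have "sig_le (Some zero_sig) (Some (Nm i k t0 P s u))"
          by (rule coord_le_sig_le) (simp add: zero_sig_def)
        thus ?thesis using Fe ta Sim by simp
      next
        case (Pr j)
        have j: "i \<le> j" "j \<le> k" using tree_alph[OF T a] Pr unfolding in_alph_def by auto
        have c: "t0 (u @ [0]) \<noteq> None" using tree_node_child[OF T a, of 0] Pr by simp
        have R0: "inR t0 P s (u @ [0])" using child_inR[OF u(1) a _ c] Pr by (cases P) auto
        have "sig_le (prio_step P j (x P (st t [0]))) (prio_step P j (Some (Nm i k t0 P s (u @ [0]))))"
          using prio_step_mono xle[OF R0] stc by simp
        moreover have "sig_le (prio_step P j (Some (Nm i k t0 P s (u @ [0])))) (Some (Nm i k t0 P s u))"
          using prio_le[OF T S R0] a Pr j by simp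
        ultimately show ?thesis using Fe ta Pr sig_le_trans by fastforce
      next
        case C1
        thus ?thesis using Fe ta combo by simp
      next
        case C2
        thus ?thesis using Fe ta combo by simp
      qed
      thus ?thesis using u(3) PP Nm_valid by simp
    qed
  qed
  have "x P t0 \<noteq> None"
  proof -
    have "inR t0 P s []" using inR_Nil T tree_root by blast
    hence "Some (Nm i k t0 P s []) \<in> Q t0" unfolding Q_def by force
    hence "x P t0 \<in> Q t0" using xQ by blast
    thus ?thesis unfolding Q_def by auto
  qed
  thus ?thesis using main by blast
qed



definition PF :: "nat \<Rightarrow> nat \<Rightarrow> (player \<Rightarrow> tree \<Rightarrow> sig) set" where
  "PF i k = {x. \<forall>P t. well_formed i k t \<longrightarrow> valid_sig i k P (x P t) \<and> sig_le (Fop k x P t) (x P t)}"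

definition mu :: "nat \<Rightarrow> nat \<Rightarrow> player \<Rightarrow> tree \<Rightarrow> sig" where
  "mu i k P t = (if well_formed i k t then sigInf {x P t | x. x \<in> PF i k} else None)"

lemma PF_None: "(\<lambda>P t. None) \<in> PF i k"
  unfolding PF_def valid_sig_def by simp

lemma mu_inf:
  assumes W: "well_formed i k t"
  shows "mu i k P t \<in> {x P t | x. x \<in> PF i k} \<and> (\<forall>x\<in>PF i k. sig_le (mu i k P t) (x P t))"
proof -
  let ?Q = "{x P t | x. x \<in> PF i k}"
  have ne: "?Q \<noteq> {}" using PF_None by blast
  have supp: "\<forall>f. Some f \<in> ?Q \<longrightarrow> (\<forall>l\<ge>Suc k. f l = cord_zero)"
  proof (rule allI, rule impI)
    fix f assume "Some f \<in> ?Q"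
    then obtain x where x: "x \<in> PF i k" "x P t = Some f" by auto
    hence "valid_sig i k P (x P t)" using W unfolding PF_def by blast
    hence "valid_sig i k P (Some f)" using x(2) by simp
    thus "\<forall>l\<ge>Suc k. f l = cord_zero" using valid_supp by blast
  qed
  have "sigInf ?Q \<in> ?Q \<and> (\<forall>y\<in>?Q. sig_le (sigInf ?Q) y)" using sigInf[OF ne supp] .
  moreover have "mu i k P t = sigInf ?Q" unfolding mu_def using W by simp
  ultimately show ?thesis by auto
qed

lemma mu_valid: "well_formed i k t \<Longrightarrow> valid_sig i k P (mu i k P t)"
proof -
  assume W: "well_formed i k t"
  obtain x where "x \<in> PF i k" "mu i k P t = x P t" using mu_inf[OF W] by blast
  thus ?thesis using W unfolding PF_def by simp
qed

lemma mu_le: "well_formed i k t \<Longrightarrow> x \<in> PF i k \<Longrightarrow> sig_le (mu i k P t) (x P t)"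
  using mu_inf by blast

lemma mu_PF: "mu i k \<in> PF i k"
  unfolding PF_def
proof (intro CollectI allI impI conjI)
  fix P t assume W: "well_formed i k t"
  show "valid_sig i k P (mu i k P t)" using mu_valid[OF W] .
  obtain x0 where x0: "x0 \<in> PF i k" "mu i k P t = x0 P t" using mu_inf[OF W] by blast
  have "sig_le (Fop k (mu i k) P t) (Fop k x0 P t)" using Fop_mono[OF mu_le[OF _ x0(1)] W] .
  moreover have "sig_le (Fop k x0 P t) (x0 P t)" using x0(1) W unfolding PF_def by blast
  ultimately show "sig_le (Fop k (mu i k) P t) (mu i k P t)" using x0(2) sig_le_trans by metis
qed

lemma mu_fix: "well_formed i k t \<Longrightarrow> mu i k P t = Fop k (mu i k) P t"
proof -
  assume W: "well_formed i k t"
  have pf: "\<And>P t. well_formed i k t \<Longrightarrow> sig_le (Fop k (mu i k) P t) (mu i k P t)"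
    using mu_PF unfolding PF_def by blast
  have "Fop k (mu i k) \<in> PF i k"
    unfolding PF_def
  proof (intro CollectI allI impI conjI)
    fix P t assume Wt: "well_formed i k t"
    show "valid_sig i k P (Fop k (mu i k) P t)" using Fop_valid[OF mu_valid Wt] .
    show "sig_le (Fop k (Fop k (mu i k)) P t) (Fop k (mu i k) P t)" using Fop_mono[OF pf Wt] .
  qed
  hence "sig_le (mu i k P t) (Fop k (mu i k) P t)" using mu_le[OF W] by blast
  thus ?thesis using pf[OF W] sig_le_antisym by blast
qed

lemma mu_None_iff: "well_formed i k t \<Longrightarrow> mu i k P t = None \<longleftrightarrow> \<not> wins k t P"
proof -
  assume W: "well_formed i k t"
  show ?thesis
  proof
    assume "mu i k P t = None"
    show "\<not> wins k t P"
    proof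
      assume "wins k t P"
      then obtain x where x: "\<forall>P' t. well_formed i k t \<longrightarrow> valid_sig i k P' (x P' t) \<and> sig_le (Fop k x P' t) (x P' t)"
        "x P t \<noteq> None" using exists_pf[OF W] by blast
      have "x \<in> PF i k" using x(1) unfolding PF_def by blast
      hence "sig_le (mu i k P t) (x P t)" using mu_le[OF W] by blast
      thus False using \<open>mu i k P t = None\<close> x(2) by simp
    qed
  next
    assume "\<not> wins k t P"
    thus "mu i k P t = None" using mu_fix[OF W] unfolding Fop_def by simp
  qed
qed

lemma sim_alph: "in_alph i k Sim" unfolding in_alph_def by simp
lemma pr_alph: "i \<le> j \<Longrightarrow> j \<le> k \<Longrightarrow> in_alph i k (Pr j)" unfolding in_alph_def by simp

lemma combine_cP: "combine P (cP P) a b = sig_min a b" unfolding combine_def by simp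
lemma combine_cQ: "combine P (cP (opp P)) a b = sig_max a b" unfolding combine_def using cP_opp_ne[of P] by simp

lemma Fop_bin:
  "wins k (binary c l r) P \<Longrightarrow> c = C1 \<or> c = C2 \<Longrightarrow> Fop k x P (binary c l r) = combine P c (x P l) (x P r)"
  unfolding Fop_def by auto

lemma cP_cases: "cP P = C1 \<or> cP P = C2" by (cases P) auto

lemma mu_conditions: "sig_conditions i k (mu i k)"
  unfolding sig_conditions_def
proof (intro conjI allI impI)
  fix P t assume W: "well_formed i k t"
  show "valid_sig i k P (mu i k P t)" using mu_valid[OF W] .
  show "mu i k P t = None \<longleftrightarrow> \<not> wins k t P" using mu_None_iff[OF W] .
next
  fix P t assume W: "well_formed i k t" and w: "wins k (unary Sim t) P"
  have WT: "well_formed i k (unary Sim t)" using wf_unary[OF W sim_alph] by simp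
  show "mu i k P (unary Sim t) = Some zero_sig" using mu_fix[OF WT] w unfolding Fop_def by simp
next
  fix P t j \<theta> assume W: "well_formed i k t" and j: "i \<le> j" "j \<le> k" and nl: "\<not> losing P j"
    and m: "mu i k P t = Some \<theta>"
  have T: "is_tree i k t" using W unfolding well_formed_def by blast
  have WT: "well_formed i k (unary (Pr j) t)" using wf_unary[OF W pr_alph[OF j]] by simp
  have "wins k t P" using m mu_None_iff[OF W, of P] by auto
  hence "wins k (unary (Pr j) t) P" using wins_unary_iff[OF T pr_alph[OF j]] by (cases P) auto
  thus "mu i k P (unary (Pr j) t) = Some (reset_from j \<theta>)"
    using mu_fix[OF WT] m nl unfolding Fop_def prio_step_def by simp
next
  fix P t j \<theta> assume W: "well_formed i k t" and j: "i \<le> j" "j \<le> k" and nl: "losing P j"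
    and m: "mu i k P t = Some \<theta>"
  have T: "is_tree i k t" using W unfolding well_formed_def by blast
  have WT: "well_formed i k (unary (Pr j) t)" using wf_unary[OF W pr_alph[OF j]] by simp
  have "wins k t P" using m mu_None_iff[OF W, of P] by auto
  hence "wins k (unary (Pr j) t) P" using wins_unary_iff[OF T pr_alph[OF j]] by (cases P) auto
  thus "mu i k P (unary (Pr j) t) = Some (incr_at j \<theta>)"
    using mu_fix[OF WT] m nl unfolding Fop_def prio_step_def by simp
next
  fix P tL tR assume L: "well_formed i k tL" and R: "well_formed i k tR"
  have TL: "is_tree i k tL" and TR: "is_tree i k tR" using L R unfolding well_formed_def by blast+
  let ?T = "binary (cP P) tL tR"
  have WT: "well_formed i k ?T" using wf_binary[OF L R cP_alph cP_arity] .
  show "mu i k P ?T = sig_min (mu i k P tL) (mu i k P tR)"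
  proof (cases "wins k ?T P")
    case True
    thus ?thesis using mu_fix[OF WT] Fop_bin[OF True cP_cases] combine_cP by simp
  next
    case False
    hence "\<not> wins k tL P" "\<not> wins k tR P" using wins_binP[OF TL TR] by auto
    hence "mu i k P tL = None" "mu i k P tR = None" using mu_None_iff L R by auto
    moreover have "mu i k P ?T = None" using mu_None_iff[OF WT] False by simp
    ultimately show ?thesis unfolding sig_min_def by simp
  qed
next
  fix P tL tR assume L: "well_formed i k tL" and R: "well_formed i k tR"
  have TL: "is_tree i k tL" and TR: "is_tree i k tR" using L R unfolding well_formed_def by blast+
  let ?T = "binary (cP (opp P)) tL tR"
  have WT: "well_formed i k ?T" using wf_binary[OF L R cP_alph cP_arity] .
  show "mu i k P ?T = sig_max (mu i k P tL) (mu i k P tR)"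
  proof (cases "wins k ?T P")
    case True
    thus ?thesis using mu_fix[OF WT] Fop_bin[OF True cP_cases] combine_cQ by simp
  next
    case False
    hence "\<not> wins k tL P \<or> \<not> wins k tR P" using wins_binQ[OF TL TR] by auto
    hence "mu i k P tL = None \<or> mu i k P tR = None" using mu_None_iff L R by auto
    moreover have "mu i k P ?T = None" using mu_None_iff[OF WT] False by simp
    ultimately show ?thesis unfolding sig_max_def by (cases "mu i k P tL"; cases "mu i k P tR") auto
  qed
qed

lemma conditions_PF:
  assumes C: "sig_conditions i k \<sigma>"
  shows "\<sigma> \<in> PF i k"
  unfolding PF_def
proof (intro CollectI allI impI conjI)
  fix P t assume W: "well_formed i k t"
  show "valid_sig i k P (\<sigma> P t)" using C W unfolding sig_conditions_def by blast
  have c1: "\<And>t. well_formed i k t \<Longrightarrow> \<sigma> P t = None \<longleftrightarrow> \<not> wins k t P" using C unfolding sig_conditions_def by blast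
  have T: "is_tree i k t" using W unfolding well_formed_def by blast
  obtain a where a: "t [] = Some a" using tree_root[OF T] by blast
  have "Fop k \<sigma> P t = \<sigma> P t"
  proof (cases "wins k t P")
    case False thus ?thesis using c1[OF W] unfolding Fop_def by simp
  next
    case True
    show ?thesis
    proof (cases a)
      case Sim
      have e: "t = unary Sim (st t [0])" using decomp_unary[OF T a] Sim by simp
      have Wc: "well_formed i k (st t [0])" using wf_child[OF W a, of 0] Sim by simp
      have "\<sigma> P t = Some zero_sig" using C Wc True e unfolding sig_conditions_def by (metis (no_types))
      thus ?thesis using True a Sim unfolding Fop_def by simp
    next
      case (Pr j)
      have e: "t = unary (Pr j) (st t [0])" using decomp_unary[OF T a] Pr by simp
      have Wc: "well_formed i k (st t [0])" using wf_child[OF W a, of 0] Pr by simp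
      have Tc: "is_tree i k (st t [0])" using Wc unfolding well_formed_def by blast
      have j: "i \<le> j" "j \<le> k" using tree_alph[OF T a] Pr unfolding in_alph_def by auto
      have "wins k (st t [0]) P" using wins_unary_iff[OF Tc pr_alph[OF j], of P] True e by (cases P) auto
      then obtain \<theta> where th: "\<sigma> P (st t [0]) = Some \<theta>" using c1[OF Wc] by auto
      show ?thesis
      proof (cases "losing P j")
        case True
        have "\<sigma> P (unary (Pr j) (st t [0])) = Some (incr_at j \<theta>)"
          using C Wc j True th unfolding sig_conditions_def by blast
        thus ?thesis using \<open>wins k t P\<close> a Pr th True e unfolding Fop_def prio_step_def by simp
      next
        case False
        have "\<sigma> P (unary (Pr j) (st t [0])) = Some (reset_from j \<theta>)"
          using C Wc j False th unfolding sig_conditions_def by blast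
        thus ?thesis using \<open>wins k t P\<close> a Pr th False e unfolding Fop_def prio_step_def by simp
      qed
    next
      case C1
      have e: "t = binary a (st t [0]) (st t [1])" using decomp_binary[OF T a] C1 by simp
      have W0: "well_formed i k (st t [0])" and W1: "well_formed i k (st t [1])"
        using wf_child[OF W a] C1 by auto
      have Fe: "Fop k \<sigma> P t = combine P a (\<sigma> P (st t [0])) (\<sigma> P (st t [1]))"
        using Fop_bin[of k a "st t [0]" "st t [1]" P \<sigma>] True e C1 by simp
      have "a = cP P \<or> a = cP (opp P)" using C1 by (cases P) auto
      thus ?thesis
      proof
        assume ap: "a = cP P"
        have "\<sigma> P t = sig_min (\<sigma> P (st t [0])) (\<sigma> P (st t [1]))"
          using C W0 W1 e ap unfolding sig_conditions_def by (metis (no_types))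
        thus ?thesis using Fe ap combine_cP by simp
      next
        assume ap: "a = cP (opp P)"
        have "\<sigma> P t = sig_max (\<sigma> P (st t [0])) (\<sigma> P (st t [1]))"
          using C W0 W1 e ap unfolding sig_conditions_def by (metis (no_types))
        thus ?thesis using Fe ap combine_cQ by simp
      qed
    next
      case C2
      have e: "t = binary a (st t [0]) (st t [1])" using decomp_binary[OF T a] C2 by simp
      have W0: "well_formed i k (st t [0])" and W1: "well_formed i k (st t [1])"
        using wf_child[OF W a] C2 by auto
      have Fe: "Fop k \<sigma> P t = combine P a (\<sigma> P (st t [0])) (\<sigma> P (st t [1]))"
        using Fop_bin[of k a "st t [0]" "st t [1]" P \<sigma>] True e C2 by simp
      have "a = cP P \<or> a = cP (opp P)" using C2 by (cases P) auto
      thus ?thesis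
      proof
        assume ap: "a = cP P"
        have "\<sigma> P t = sig_min (\<sigma> P (st t [0])) (\<sigma> P (st t [1]))"
          using C W0 W1 e ap unfolding sig_conditions_def by (metis (no_types))
        thus ?thesis using Fe ap combine_cP by simp
      next
        assume ap: "a = cP (opp P)"
        have "\<sigma> P t = sig_max (\<sigma> P (st t [0])) (\<sigma> P (st t [1]))"
          using C W0 W1 e ap unfolding sig_conditions_def by (metis (no_types))
        thus ?thesis using Fe ap combine_cQ by simp
      qed
    qed
  qed
  thus "sig_le (Fop k \<sigma> P t) (\<sigma> P t)" by simp
qed

lemma mu_minimal: "pointwise_minimal i k (mu i k)"
  unfolding pointwise_minimal_def
  using mu_conditions conditions_PF mu_le by blast

theorem mainTheorem6:
  fixes i k :: nat
  assumes "i < k"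
  shows "\<exists>\<sigma>. pointwise_minimal i k \<sigma> \<and>
           (\<forall>\<sigma>'. pointwise_minimal i k \<sigma>' \<longrightarrow>
              (\<forall>P t. well_formed i k t \<longrightarrow> \<sigma>' P t = \<sigma> P t))"
proof (intro exI conjI allI impI)
  show "pointwise_minimal i k (mu i k)" by (rule mu_minimal)
  fix \<sigma>' P t assume m: "pointwise_minimal i k \<sigma>'" and W: "well_formed i k t"
  have "sig_le (\<sigma>' P t) (mu i k P t)" using m mu_conditions W unfolding pointwise_minimal_def by blast
  moreover have "sig_le (mu i k P t) (\<sigma>' P t)" using mu_minimal m W unfolding pointwise_minimal_def by blast
  ultimately show "\<sigma>' P t = mu i k P t" using sig_le_antisym by blast
qed


end
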